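(* Let $\mathcal H$, $U$, $\mathcal K$, $P_{\mathcal K}$, $S=(I-P_{\mathcal K})U$, $\Theta_S$ and $\tilde U$ be as in the context. Let $E$ be the spectral measure of $U$, i.e. $\langle (U+zI)(U-zI)^{-1}h_1,h_2\rangle=\int_{\mathbb T}\frac{\xi+z}{\xi-z}\,d\langle E(\xi)h_1,h_2\rangle$ for all $h_1,h_2\in\mathcal H$, $z\in\mathbb D$. Let $B$ be the generalized spectral measure on $\mathcal K$ determined by $$\big\langle (\tilde U+\Theta_S(z))(\tilde U-\Theta_S(z))^{-1}k_1,k_2\big\rangle=\int_{\mathbb T}\frac{\xi+z}{\xi-z}\,d\langle B(\xi)k_1,k_2\rangle\qquad(k_1,k_2\in\mathcal K,\ z\in\mathbb D).$$ Then for every Borel set $\Delta\subset\mathbb T$, $B(\Delta)=P_{\mathcal K}E(\Delta)|_{\mathcal K}$.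
   Context: $\mathcal H$ is a complex Hilbert space, $U\in\mathcal B(\mathcal H)$ is unitary, $\mathcal K\subset \mathcal H$ is a closed subspace with orthogonal projection $P_{\mathcal K}$, $S=(I-P_{\mathcal K})U$, and $\tilde U:U^*(\mathcal K)\to\mathcal K$ is the restriction of $U$. For a contraction $T$, $D_T=(I-T^*T)^{1/2}$, $D_{T^*}=(I-TT^* )^{1/2}$, $\mathcal D_T=\overline{D_T\mathcal H}$, $\mathcal D_{T^*}=\overline{D_{T^*}\mathcal H}$, and the characteristic function is $\Theta_T(z)=\big(-T+zD_{T^*}(I-zT^* )^{-1}D_T\big)|_{\mathcal D_T}$, $z\in\mathbb D$; here $\Theta_S(z):U^*(\mathcal K)\to\mathcal K$. A generalized spectral measure on $\mathbb T$ with values in $\mathcal B(\mathcal K)$ is a map $B$ from Borel sets of $\mathbb T$ to positive bounded operators on $\mathcal K$ with $B(\emptyset)=0$, $B(\mathbb T)=I$, and countably additive in the strong operator topology. *)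

theory Defs
  imports "HOL-Analysis.Analysis"
begin

class cvec = real_vector +
  fixes scaleC :: "complex \<Rightarrow> 'a \<Rightarrow> 'a"
  assumes scaleC_add_right: "scaleC a (x + y) = scaleC a x + scaleC a y"
    and scaleC_add_left: "scaleC (a + b) x = scaleC a x + scaleC b x"
    and scaleC_scaleC: "scaleC a (scaleC b x) = scaleC (a * b) x"
    and scaleC_one: "scaleC 1 x = x"
    and scaleR_is_scaleC: "scaleR r x = scaleC (complex_of_real r) x"

class cinner_space = cvec + real_normed_vector +
  fixes cinner :: "'a \<Rightarrow> 'a \<Rightarrow> complex"
  assumes cinner_commute: "cinner x y = cnj (cinner y x)"
    and cinner_add_left: "cinner (x + y) z = cinner x z + cinner y z"
    and cinner_scaleC_left: "cinner (scaleC c x) y = c * cinner x y"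
    and cinner_real_nonneg: "Im (cinner x x) = 0 \<and> 0 \<le> Re (cinner x x)"
    and cinner_eq_zero_iff: "cinner x x = 0 \<longleftrightarrow> x = 0"
    and norm_eq_sqrt_cinner: "norm x = sqrt (Re (cinner x x))"

class chilbert = cinner_space + complete_space

definition hs_clinear :: "('a::cvec \<Rightarrow> 'b::cvec) \<Rightarrow> bool" where
  "hs_clinear f \<longleftrightarrow> (\<forall>x y. f (x + y) = f x + f y) \<and> (\<forall>c x. f (scaleC c x) = scaleC c (f x))"

definition hs_bounded :: "('a::cinner_space \<Rightarrow> 'b::cinner_space) \<Rightarrow> bool" where
  "hs_bounded f \<longleftrightarrow> hs_clinear f \<and> (\<exists>C. \<forall>x. norm (f x) \<le> C * norm x)"

definition hs_adj :: "('a::chilbert \<Rightarrow> 'a) \<Rightarrow> ('a \<Rightarrow> 'a)" where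
  "hs_adj T = (THE T'. \<forall>x y. cinner (T x) y = cinner x (T' y))"

definition hs_unitary :: "('a::chilbert \<Rightarrow> 'a) \<Rightarrow> bool" where
  "hs_unitary U \<longleftrightarrow> hs_bounded U \<and> bij U \<and> (\<forall>x y. cinner (U x) (U y) = cinner x y)"

definition hs_closed_subspace :: "'a::chilbert set \<Rightarrow> bool" where
  "hs_closed_subspace K \<longleftrightarrow> 0 \<in> K \<and> (\<forall>x\<in>K. \<forall>y\<in>K. x + y \<in> K)
      \<and> (\<forall>c. \<forall>x\<in>K. scaleC c x \<in> K) \<and> closed K"

definition hs_proj :: "'a::chilbert set \<Rightarrow> 'a \<Rightarrow> 'a" where
  "hs_proj K x = (THE y. y \<in> K \<and> (\<forall>k\<in>K. cinner (x - y) k = 0))"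

definition hs_positive :: "('a::chilbert \<Rightarrow> 'a) \<Rightarrow> bool" where
  "hs_positive D \<longleftrightarrow> hs_bounded D \<and> (\<forall>x. Im (cinner (D x) x) = 0 \<and> 0 \<le> Re (cinner (D x) x))"

definition hs_sqrt :: "('a::chilbert \<Rightarrow> 'a) \<Rightarrow> ('a \<Rightarrow> 'a)" where
  "hs_sqrt A = (THE D. hs_positive D \<and> D \<circ> D = A)"

definition defect :: "('a::chilbert \<Rightarrow> 'a) \<Rightarrow> ('a \<Rightarrow> 'a)" where
  "defect T = hs_sqrt (\<lambda>x. x - hs_adj T (T x))"

definition defect_star :: "('a::chilbert \<Rightarrow> 'a) \<Rightarrow> ('a \<Rightarrow> 'a)" where
  "defect_star T = hs_sqrt (\<lambda>x. x - T (hs_adj T x))"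

definition defect_space :: "('a::chilbert \<Rightarrow> 'a) \<Rightarrow> 'a set" where
  "defect_space T = closure (range (defect T))"

text \<open>Characteristic function
  Theta_T(z) = (-T + z D_{T*} (I - z T*)^{-1} D_T) restricted to the defect space;
  the value on vectors outside the defect space is irrelevant.\<close>
definition char_fun :: "('a::chilbert \<Rightarrow> 'a) \<Rightarrow> complex \<Rightarrow> 'a \<Rightarrow> 'a" where
  "char_fun T z x = - T x + scaleC z (defect_star T (inv (\<lambda>y. y - scaleC z (hs_adj T y)) (defect T x)))"

abbreviation unit_circle :: "complex set" where
  "unit_circle \<equiv> sphere 0 1"

definition borel_circle :: "complex set set" where
  "borel_circle = {\<Delta>. \<Delta> \<in> sets borel \<and> \<Delta> \<subseteq> unit_circle}"

text \<open>A generalized spectral measure on the closed subspace K: B maps Borel sets of the circle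
  to operators, of which only the restriction to K matters (bounded, positive operators on K).\<close>
definition gen_spectral_measure :: "'a::chilbert set \<Rightarrow> (complex set \<Rightarrow> 'a \<Rightarrow> 'a) \<Rightarrow> bool" where
  "gen_spectral_measure K B \<longleftrightarrow>
     (\<forall>\<Delta>\<in>borel_circle.
        (\<forall>k\<in>K. B \<Delta> k \<in> K)
      \<and> (\<forall>x\<in>K. \<forall>y\<in>K. B \<Delta> (x + y) = B \<Delta> x + B \<Delta> y)
      \<and> (\<forall>c. \<forall>x\<in>K. B \<Delta> (scaleC c x) = scaleC c (B \<Delta> x))
      \<and> (\<exists>C. \<forall>k\<in>K. norm (B \<Delta> k) \<le> C * norm k)
      \<and> (\<forall>k\<in>K. Im (cinner (B \<Delta> k) k) = 0 \<and> 0 \<le> Re (cinner (B \<Delta> k) k)))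
   \<and> (\<forall>k\<in>K. B {} k = 0)
   \<and> (\<forall>k\<in>K. B unit_circle k = k)
   \<and> (\<forall>A :: nat \<Rightarrow> complex set. range A \<subseteq> borel_circle \<longrightarrow> disjoint_family A \<longrightarrow>
        (\<forall>k\<in>K. (\<lambda>n. \<Sum>i<n. B (A i) k) \<longlonglongrightarrow> B (\<Union>(range A)) k))"

definition spectral_measure :: "(complex set \<Rightarrow> 'a::chilbert \<Rightarrow> 'a) \<Rightarrow> bool" where
  "spectral_measure E \<longleftrightarrow> gen_spectral_measure UNIV E \<and> (\<forall>\<Delta>\<in>borel_circle. E \<Delta> \<circ> E \<Delta> = E \<Delta>)"

definition opm_scalar :: "(complex set \<Rightarrow> 'a::chilbert \<Rightarrow> 'a) \<Rightarrow> 'a \<Rightarrow> complex measure" where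
  "opm_scalar B k = measure_of unit_circle borel_circle (\<lambda>\<Delta>. ennreal (Re (cinner (B \<Delta> k) k)))"

text \<open>Integral of f against the complex measure Delta |-> <B(Delta)k1,k2>, obtained by
  polarization: <B k1,k2> = 1/4 sum_{j<4} i^j <B(k1 + i^j k2), k1 + i^j k2>.\<close>
definition opm_integral ::
  "(complex set \<Rightarrow> 'a::chilbert \<Rightarrow> 'a) \<Rightarrow> (complex \<Rightarrow> complex) \<Rightarrow> 'a \<Rightarrow> 'a \<Rightarrow> complex" where
  "opm_integral B f k1 k2 =
     (1/4) * (\<Sum>j<4::nat. \<i> ^ j * integral\<^sup>L (opm_scalar B (k1 + scaleC (\<i> ^ j) k2)) f)"

end

theory Submission
  imports Defs
begin


lemma scaleC_zero_right[simp]: "scaleC c (0::'a::cvec) = 0"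
proof -
  have "scaleC c 0 + scaleC c 0 = scaleC c (0 + 0::'a)" by (simp only: scaleC_add_right)
  then show ?thesis by simp
qed

lemma scaleC_zero_left[simp]: "scaleC 0 (x::'a::cvec) = 0"
proof -
  have "scaleC 0 x + scaleC 0 x = scaleC (0 + 0) x" by (simp only: scaleC_add_left)
  then show ?thesis by simp
qed

lemma scaleC_minus_one[simp]: "scaleC (-1) (x::'a::cvec) = - x"
proof -
  have "scaleC (-1) x = scaleR (-1) x" by (simp add: scaleR_is_scaleC)
  then show ?thesis by simp
qed

lemma scaleC_minus_right: "scaleC c (- x) = - scaleC c (x::'a::cvec)"
proof -
  have "scaleC c (- x) + scaleC c x = scaleC c (-x + x)" by (simp only: scaleC_add_right)
  then show ?thesis by (simp add: eq_neg_iff_add_eq_0)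
qed

lemma scaleC_diff_right: "scaleC c (x - y) = scaleC c x - scaleC c (y::'a::cvec)"
  by (simp only: diff_conv_add_uminus scaleC_add_right scaleC_minus_right)

lemma scaleC_minus_left: "scaleC (- c) x = - scaleC c (x::'a::cvec)"
proof -
  have "scaleC (- c) x + scaleC c x = scaleC (-c + c) x" by (simp only: scaleC_add_left)
  then show ?thesis by (simp add: eq_neg_iff_add_eq_0)
qed

lemma scaleC_diff_left: "scaleC (c - d) x = scaleC c x - scaleC d (x::'a::cvec)"
  by (simp only: diff_conv_add_uminus scaleC_add_left scaleC_minus_left)

lemma cinner_zero_left[simp]: "cinner 0 (y::'a::cinner_space) = 0"
proof -
  have "cinner 0 y + cinner 0 y = cinner (0 + 0) y" by (simp only: cinner_add_left)
  then show ?thesis by simp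
qed

lemma cinner_zero_right[simp]: "cinner (y::'a::cinner_space) 0 = 0"
  by (subst cinner_commute) simp

lemma cinner_add_right: "cinner (x::'a::cinner_space) (y + z) = cinner x y + cinner x z"
  by (subst (1 2 3) cinner_commute) (simp add: cinner_add_left)

lemma cinner_scaleC_right: "cinner (x::'a::cinner_space) (scaleC c y) = cnj c * cinner x y"
  by (subst (1 2) cinner_commute) (simp add: cinner_scaleC_left)

lemma cinner_minus_left: "cinner (- x) (y::'a::cinner_space) = - cinner x y"
proof -
  have "cinner (- x) y + cinner x y = cinner (-x + x) y" by (simp only: cinner_add_left)
  then show ?thesis by (simp add: eq_neg_iff_add_eq_0)
qed

lemma cinner_minus_right: "cinner x (- y::'a::cinner_space) = - cinner x y"
  by (subst (1 2) cinner_commute) (simp add: cinner_minus_left)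

lemma cinner_diff_left: "cinner (x - z) (y::'a::cinner_space) = cinner x y - cinner z y"
  by (simp only: diff_conv_add_uminus cinner_add_left cinner_minus_left)

lemma cinner_diff_right: "cinner x (y - z::'a::cinner_space) = cinner x y - cinner x z"
  by (simp only: diff_conv_add_uminus cinner_add_right cinner_minus_right)

lemma cinner_self_real: "cinner x (x::'a::cinner_space) = complex_of_real ((norm x)^2)"
proof -
  have "Im (cinner x x) = 0" "0 \<le> Re (cinner x x)" using cinner_real_nonneg by auto
  moreover have "(norm x)^2 = Re (cinner x x)" using norm_eq_sqrt_cinner[of x] cinner_real_nonneg[of x]
    by simp
  ultimately show ?thesis by (simp add: complex_eq_iff)
qed

lemma norm_sq_cinner: "(norm x)^2 = Re (cinner x (x::'a::cinner_space))"
  using cinner_self_real[of x] by simp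


lemma cinner_ext: "(\<And>y. cinner x y = cinner x' y) \<Longrightarrow> (x::'a::cinner_space) = x'"
proof -
  assume h: "\<And>y. cinner x y = cinner x' y"
  have "cinner (x - x') (x - x') = cinner x (x - x') - cinner x' (x - x')" by (rule cinner_diff_left)
  also have "\<dots> = 0" by (simp only: h diff_self)
  finally have "cinner (x - x') (x - x') = 0" .
  then have "x - x' = 0" using cinner_eq_zero_iff by blast
  then show ?thesis by simp
qed
lemma norm_scaleC: "norm (scaleC c (x::'a::cinner_space)) = cmod c * norm x"
proof -
  have "cinner (scaleC c x) (scaleC c x) = cnj c * (c * cinner x x)"
    by (simp only: cinner_scaleC_left cinner_scaleC_right)
  also have "\<dots> = complex_of_real ((cmod c)^2 * (norm x)^2)"
    by (simp only: mult.assoc[symmetric] mult.commute[of "cnj c" c] cinner_self_real complex_mult_cnj of_real_mult cmod_power2)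
  finally have "(norm (scaleC c x))^2 = (cmod c * norm x)^2"
    by (simp only: norm_sq_cinner Re_complex_of_real power_mult_distrib)
  then show ?thesis by (simp add: power2_eq_iff_nonneg)
qed

lemma cinner_commute_zero: "cinner x y = 0 \<Longrightarrow> cinner y (x::'a::cinner_space) = 0"
  by (subst cinner_commute) simp

lemma cinner_add_sq: "cinner (x+y) (x+y) = cinner x x + cinner x y + cinner y x + cinner y (y::'a::cinner_space)"
  by (simp only: cinner_add_left cinner_add_right ac_simps)

lemma cinner_diff_sq: "cinner (x-y) (x-y) = cinner x x - cinner x y - cinner y x + cinner y (y::'a::cinner_space)"
  by (simp only: cinner_diff_left cinner_diff_right) (simp add: algebra_simps)

lemma pythagoras: "cinner x y = 0 \<Longrightarrow> (norm (x + y))^2 = (norm x)^2 + (norm (y::'a::cinner_space))^2"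
proof -
  assume h: "cinner x y = 0"
  then have "cinner y x = 0" by (rule cinner_commute_zero)
  then show ?thesis using h by (simp only: norm_sq_cinner cinner_add_sq) simp
qed

lemma parallelogram: "(norm (x + y))^2 + (norm (x - y))^2 = 2*(norm x)^2 + 2*(norm (y::'a::cinner_space))^2"
  by (simp only: norm_sq_cinner cinner_add_sq cinner_diff_sq) simp

lemma re_cinner_commute: "Re (cinner y x) = Re (cinner x (y::'a::cinner_space))"
  by (subst cinner_commute) simp

lemma re_cinner_polar: "Re (cinner x y) = ((norm (x + y))^2 - (norm (x - y))^2) / 4"
proof -
  have "Re (cinner y x) = Re (cinner x y)" by (rule re_cinner_commute)
  then show ?thesis
    by (simp only: norm_sq_cinner cinner_add_sq cinner_diff_sq) simp
qed


lemma closed_subspace_scaleR: "hs_closed_subspace K \<Longrightarrow> x \<in> K \<Longrightarrow> scaleR r x \<in> K"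
  unfolding hs_closed_subspace_def by (simp add: scaleR_is_scaleC)

lemma closed_subspace_diff: "hs_closed_subspace K \<Longrightarrow> x \<in> K \<Longrightarrow> y \<in> K \<Longrightarrow> x - y \<in> K"
  unfolding hs_closed_subspace_def
  by (metis diff_conv_add_uminus scaleC_minus_one)

lemma orth_min:
  fixes r k :: "'a::cinner_space"
  assumes "\<And>t. norm r \<le> norm (r - scaleC t k)"
  shows "cinner r k = 0"
proof (cases "k = 0")
  case True then show ?thesis by simp
next
  case False
  define a where "a = cinner r k"
  define n where "n = (norm k)^2"
  have n0: "n > 0" using False by (simp add: n_def)
  define t where "t = a / complex_of_real n"
  have kk: "cinner k k = complex_of_real n" by (simp add: n_def cinner_self_real)
  have kr: "cinner k r = cnj a" unfolding a_def by (subst cinner_commute) simp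
  have "cinner (r - scaleC t k) (r - scaleC t k)
      = cinner r r - cnj t * a - t * cnj a + t * cnj t * complex_of_real n"
    by (simp add: cinner_diff_sq cinner_scaleC_left cinner_scaleC_right kk kr a_def[symmetric] ac_simps)
  also have "\<dots> = cinner r r - complex_of_real ((cmod a)^2 / n)"
  proof -
    have am: "a * cnj a = complex_of_real (cmod a) * complex_of_real (cmod a)"
      by (simp only: complex_norm_square[symmetric] power2_eq_square of_real_mult)
    show ?thesis using n0 unfolding t_def
      by (simp add: field_simps am power2_eq_square)
  qed
  finally have "(norm (r - scaleC t k))^2 = (norm r)^2 - (cmod a)^2 / n"
    by (simp add: norm_sq_cinner)
  moreover have "(norm r)^2 \<le> (norm (r - scaleC t k))^2"
    using assms[of t] by (simp add: power_mono)
  ultimately have "(cmod a)^2 / n \<le> 0" by linarith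
  then have "(cmod a)^2 \<le> 0" using n0 by (simp add: divide_le_0_iff)
  then show ?thesis unfolding a_def[symmetric] by simp
qed


lemma lin3: "(A::real) \<le> p \<Longrightarrow> B \<le> q \<Longrightarrow> r \<le> C \<Longrightarrow> 2*A+2*B - C \<le> 2*p+2*q - r"
  by linarith

lemma proj_exists:
  fixes x :: "'a::chilbert"
  assumes K: "hs_closed_subspace K"
  shows "\<exists>y\<in>K. \<forall>k\<in>K. cinner (x - y) k = 0"
proof -
  have K0: "0 \<in> K" and Kadd: "\<And>a b. a \<in> K \<Longrightarrow> b \<in> K \<Longrightarrow> a + b \<in> K"
    and Ksc: "\<And>c a. a \<in> K \<Longrightarrow> scaleC c a \<in> K" and Kcl: "closed K"
    using K unfolding hs_closed_subspace_def by auto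
  define D where "D = (\<lambda>k. norm (x - k)) ` K"
  define d where "d = Inf D"
  have Dne: "D \<noteq> {}" using K0 by (auto simp: D_def)
  have bdd: "bdd_below D" unfolding D_def by (rule bdd_belowI[of _ 0]) auto
  have dle: "\<And>k. k \<in> K \<Longrightarrow> d \<le> norm (x - k)"
    unfolding d_def D_def by (rule cInf_lower) (use bdd in \<open>auto simp: D_def\<close>)
  have d0: "0 \<le> d" unfolding d_def by (rule cInf_greatest[OF Dne]) (auto simp: D_def)
  have "\<forall>n. \<exists>k\<in>K. norm (x - k) < d + inverse (real (Suc n))"
  proof
    fix n
    have "Inf D < d + inverse (real (Suc n))" unfolding d_def by simp
    then obtain t where "t \<in> D" "t < d + inverse (real (Suc n))" using cInf_lessD[OF Dne] by blast
    then show "\<exists>k\<in>K. norm (x - k) < d + inverse (real (Suc n))" by (auto simp: D_def)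
  qed
  then obtain y where yK: "\<And>n. y n \<in> K" and yd: "\<And>n. norm (x - y n) < d + inverse (real (Suc n))"
    by metis
  define e where "e = (\<lambda>n::nat. inverse (real (Suc n)))"
  have e01: "0 < e n" "e n \<le> 1" for n by (auto simp: e_def field_simps)
  have ysq: "(norm (x - y n))^2 \<le> d^2 + (2*d+1) * e n" for n
  proof -
    have "norm (x - y n) \<le> d + e n" using yd[of n] by (simp add: e_def)
    then have "(norm (x - y n))^2 \<le> (d + e n)^2" by (simp add: power_mono)
    also have "\<dots> = d^2 + 2*d*e n + e n * e n" by (simp add: power2_eq_square algebra_simps)
    also have "\<dots> \<le> d^2 + (2*d+1) * e n"
      using e01[of n] by (simp add: algebra_simps mult_left_le_one_le)
    finally show ?thesis .
  qed
  have key: "(norm (y n - y m))^2 \<le> 2*(2*d+1)*(e n + e m)" for n m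
  proof -
    define a where "a = x - y n"
    define b where "b = x - y m"
    define mid where "mid = scaleR (1/2) (y n + y m)"
    have midK: "mid \<in> K" unfolding mid_def using Kadd[OF yK yK] K by (simp add: closed_subspace_scaleR)
    have ab: "a + b = scaleR 2 (x - mid)" unfolding a_def b_def mid_def by (simp add: algebra_simps scaleR_2)
    have "norm (a + b) = 2 * norm (x - mid)" unfolding ab by simp
    then have "2 * d \<le> norm (a + b)" using dle[OF midK] by simp
    then have "(2 * d)^2 \<le> (norm (a + b))^2"
      using d0 by (intro power_mono) auto
    then have ab2: "4 * d^2 \<le> (norm (a + b))^2" by (simp add: power_mult_distrib)
    have "a - b = y m - y n" unfolding a_def b_def by simp
    then have "norm (a - b) = norm (y n - y m)" by (simp add: norm_minus_commute)
    then have "(norm (y n - y m))^2 = 2*(norm a)^2 + 2*(norm b)^2 - (norm (a + b))^2"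
      using parallelogram[of a b] by simp
    also have "\<dots> \<le> 2*(d^2 + (2*d+1) * e n) + 2*(d^2 + (2*d+1) * e m) - 4 * d^2"
      using ysq[of n] ysq[of m] ab2 unfolding a_def[symmetric] b_def[symmetric]
      by (rule lin3)
    finally show ?thesis by (simp add: algebra_simps)
  qed
  have "Cauchy y"
  proof (rule metric_CauchyI)
    fix eps :: real assume eps: "0 < eps"
    obtain N :: nat where N: "4*(2*d+1) / eps^2 < real N"
      using reals_Archimedean2 by blast
    have pos: "0 < 4*(2*d+1)" using d0 by simp
    have eN: "e N < eps^2 / (4*(2*d+1))"
    proof -
      have e2: "0 < eps^2" using eps by simp
      have "4*(2*d+1) < eps^2 * real N" using N e2 by (simp add: divide_less_eq mult.commute)
      also have "\<dots> \<le> eps^2 * real (Suc N)" using e2 by (intro mult_left_mono) auto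
      finally have "4*(2*d+1) < eps^2 * real (Suc N)" .
      then show ?thesis unfolding e_def using pos eps by (simp add: field_simps)
    qed
    show "\<exists>M. \<forall>m\<ge>M. \<forall>n\<ge>M. dist (y m) (y n) < eps"
    proof (intro exI allI impI)
      fix m n assume mn: "N \<le> m" "N \<le> n"
      have em: "e m \<le> e N" "e n \<le> e N" using mn by (auto simp: e_def field_simps)
      have "(norm (y m - y n))^2 \<le> 2*(2*d+1)*(e m + e n)" by (rule key)
      also have "\<dots> \<le> 2*(2*d+1)*(2 * e N)" using em d0 by (intro mult_left_mono) auto
      also have "\<dots> < eps^2" using eN pos by (simp add: field_simps)
      finally have "(norm (y m - y n))^2 < eps^2" .
      then show "dist (y m) (y n) < eps" using eps by (simp add: dist_norm power_less_imp_less_base)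
    qed
  qed
  then obtain l where yl: "y \<longlonglongrightarrow> l" using Cauchy_convergent_iff convergent_def by blast
  have lK: "l \<in> K" using closed_sequentially[OF Kcl] yK yl by blast
  have "(\<lambda>n. norm (x - y n)) \<longlonglongrightarrow> norm (x - l)" by (intro tendsto_intros yl)
  moreover have "(\<lambda>n. d + e n) \<longlonglongrightarrow> d + 0"
    unfolding e_def by (intro tendsto_intros LIMSEQ_inverse_real_of_nat)
  ultimately have ld: "norm (x - l) \<le> d"
    using yd by (intro LIMSEQ_le) (auto simp: e_def less_imp_le)
  show ?thesis
  proof (intro bexI[OF _ lK] ballI)
    fix k assume k: "k \<in> K"
    show "cinner (x - l) k = 0"
    proof (rule orth_min)
      fix t
      have "l + scaleC t k \<in> K" using Kadd[OF lK Ksc[OF k]] .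
      then have "d \<le> norm (x - (l + scaleC t k))" by (rule dle)
      then show "norm (x - l) \<le> norm (x - l - scaleC t k)" using ld by (simp add: algebra_simps)
    qed
  qed
qed


lemma proj_unique:
  fixes x :: "'a::chilbert"
  assumes K: "hs_closed_subspace K" and y: "y \<in> K" and o: "\<forall>k\<in>K. cinner (x - y) k = 0"
  shows "hs_proj K x = y"
  unfolding hs_proj_def
proof (rule the_equality)
  show "y \<in> K \<and> (\<forall>k\<in>K. cinner (x - y) k = 0)" using y o by blast
next
  fix y' assume y': "y' \<in> K \<and> (\<forall>k\<in>K. cinner (x - y') k = 0)"
  have d: "y - y' \<in> K" using closed_subspace_diff[OF K y] y' by blast
  have "cinner (y - y') (y - y') = cinner (x - y') (y - y') - cinner (x - y) (y - y')"
    by (simp add: cinner_diff_left[symmetric])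
  also have "\<dots> = 0" using o y' d by simp
  finally have "y - y' = 0" using cinner_eq_zero_iff by blast
  then show "y' = y" by simp
qed

lemma proj_props:
  fixes x :: "'a::chilbert"
  assumes K: "hs_closed_subspace K"
  shows "hs_proj K x \<in> K" "\<And>k. k \<in> K \<Longrightarrow> cinner (x - hs_proj K x) k = 0"
proof -
  obtain y where "y \<in> K" "\<forall>k\<in>K. cinner (x - y) k = 0" using proj_exists[OF K] by blast
  moreover then have "hs_proj K x = y" using proj_unique[OF K] by blast
  ultimately show "hs_proj K x \<in> K" "\<And>k. k \<in> K \<Longrightarrow> cinner (x - hs_proj K x) k = 0" by auto
qed

lemma proj_fix: "hs_closed_subspace K \<Longrightarrow> (k::'a::chilbert) \<in> K \<Longrightarrow> hs_proj K k = k"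
  by (rule proj_unique) auto

lemma proj_add:
  fixes x y :: "'a::chilbert"
  assumes K: "hs_closed_subspace K"
  shows "hs_proj K (x + y) = hs_proj K x + hs_proj K y"
proof (rule proj_unique[OF K])
  show "hs_proj K x + hs_proj K y \<in> K" using K proj_props(1)[OF K] unfolding hs_closed_subspace_def by blast
  show "\<forall>k\<in>K. cinner (x + y - (hs_proj K x + hs_proj K y)) k = 0"
  proof
    fix k assume k: "k \<in> K"
    have "x + y - (hs_proj K x + hs_proj K y) = (x - hs_proj K x) + (y - hs_proj K y)" by simp
    then show "cinner (x + y - (hs_proj K x + hs_proj K y)) k = 0"
      using proj_props(2)[OF K k] by (simp only: cinner_add_left) simp
  qed
qed

lemma proj_scaleC:
  fixes x :: "'a::chilbert"
  assumes K: "hs_closed_subspace K"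
  shows "hs_proj K (scaleC c x) = scaleC c (hs_proj K x)"
proof (rule proj_unique[OF K])
  show "scaleC c (hs_proj K x) \<in> K" using K proj_props(1)[OF K] unfolding hs_closed_subspace_def by blast
  show "\<forall>k\<in>K. cinner (scaleC c x - scaleC c (hs_proj K x)) k = 0"
  proof
    fix k assume k: "k \<in> K"
    show "cinner (scaleC c x - scaleC c (hs_proj K x)) k = 0"
      using proj_props(2)[OF K k] by (simp only: scaleC_diff_right[symmetric] cinner_scaleC_left) simp
  qed
qed

lemma proj_diff:
  fixes x y :: "'a::chilbert"
  assumes K: "hs_closed_subspace K"
  shows "hs_proj K (x - y) = hs_proj K x - hs_proj K y"
  using proj_add[OF K, of "x - y" y] by simp

lemma proj_orth_left:
  fixes x :: "'a::chilbert"
  assumes K: "hs_closed_subspace K" and k: "k \<in> K"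
  shows "cinner k (x - hs_proj K x) = 0"
  using proj_props(2)[OF K k] by (rule cinner_commute_zero)

lemma proj_selfadj:
  fixes x y :: "'a::chilbert"
  assumes K: "hs_closed_subspace K"
  shows "cinner (hs_proj K x) y = cinner x (hs_proj K y)"
proof -
  have "cinner (hs_proj K x) y = cinner (hs_proj K x) (hs_proj K y) + cinner (hs_proj K x) (y - hs_proj K y)"
    by (simp only: cinner_add_right[symmetric]) simp
  also have "\<dots> = cinner (hs_proj K x) (hs_proj K y)"
    using proj_orth_left[OF K proj_props(1)[OF K]] by simp
  also have "\<dots> = cinner (hs_proj K x) (hs_proj K y) + cinner (x - hs_proj K x) (hs_proj K y)"
    using proj_props(2)[OF K proj_props(1)[OF K]] by simp
  also have "\<dots> = cinner x (hs_proj K y)"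
    by (simp only: cinner_add_left[symmetric]) simp
  finally show ?thesis .
qed

lemma proj_norm:
  fixes x :: "'a::chilbert"
  assumes K: "hs_closed_subspace K"
  shows "norm (hs_proj K x) \<le> norm x"
proof -
  have "(norm (hs_proj K x + (x - hs_proj K x)))^2 = (norm (hs_proj K x))^2 + (norm (x - hs_proj K x))^2"
    using proj_orth_left[OF K proj_props(1)[OF K]] by (rule pythagoras)
  then have "(norm (hs_proj K x))^2 \<le> (norm x)^2" by simp
  then show ?thesis by (simp add: power2_le_iff_abs_le)
qed

lemma proj_idem: "hs_closed_subspace K \<Longrightarrow> hs_proj K (hs_proj K (x::'a::chilbert)) = hs_proj K x"
  by (rule proj_fix) (auto intro: proj_props)


lemma clinear_add: "hs_clinear f \<Longrightarrow> f (x + y) = f x + f y"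
  unfolding hs_clinear_def by blast
lemma clinear_scaleC: "hs_clinear f \<Longrightarrow> f (scaleC c x) = scaleC c (f x)"
  unfolding hs_clinear_def by blast
lemma clinear_zero: "hs_clinear f \<Longrightarrow> f 0 = (0::'b::cvec)"
  using clinear_scaleC[of f 0 "0::'a::cvec"] by simp
lemma clinear_minus: "hs_clinear f \<Longrightarrow> f (- x) = - (f x::'b::cvec)"
  using clinear_scaleC[of f "-1" x] by simp
lemma clinear_diff: "hs_clinear f \<Longrightarrow> f (x - y) = f x - (f y::'b::cvec)"
  using clinear_add[of f x "- y"] clinear_minus[of f y] by (simp only: diff_conv_add_uminus)

lemma cinner_ext_right: "(\<And>x. cinner x y = cinner x y') \<Longrightarrow> (y::'a::cinner_space) = y'"
proof -
  assume h: "\<And>x. cinner x y = cinner x y'"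
  show ?thesis
  proof (rule cinner_ext)
    fix x show "cinner y x = cinner y' x"
      using h[of x] by (subst (1 2) cinner_commute) simp
  qed
qed

lemma hs_adj_eq:
  fixes T :: "'a::chilbert \<Rightarrow> 'a"
  assumes "\<And>x y. cinner (T x) y = cinner x (T' y)"
  shows "hs_adj T = T'"
  unfolding hs_adj_def
proof (rule the_equality)
  show "\<forall>x y. cinner (T x) y = cinner x (T' y)" using assms by blast
next
  fix T'' assume h: "\<forall>x y. cinner (T x) y = cinner x (T'' y)"
  show "T'' = T'"
  proof
    fix y show "T'' y = T' y"
      by (rule cinner_ext_right) (use h assms in metis)
  qed
qed

section \<open>Unitaries\<close>

locale unitary_op =
  fixes U :: "'a::chilbert \<Rightarrow> 'a"
  assumes unit: "hs_unitary U"
begin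

lemma lin: "hs_clinear U" using unit unfolding hs_unitary_def hs_bounded_def by blast
lemma bij: "bij U" using unit unfolding hs_unitary_def by blast
lemma isom: "cinner (U x) (U y) = cinner x y" using unit unfolding hs_unitary_def by blast
lemma norm: "norm (U x) = norm x"
proof -
  have "(norm (U x))^2 = (norm x)^2" by (simp add: norm_sq_cinner isom)
  then show ?thesis by (simp add: power2_eq_iff_nonneg)
qed
lemma U_Ui: "U (inv U y) = y" using bij by (simp add: bij_def surj_f_inv_f)
lemma Ui_U: "inv U (U x) = x" using bij by (simp add: bij_def inv_f_f)
lemma Ui_lin: "hs_clinear (inv U)"
  unfolding hs_clinear_def
proof (intro conjI allI)
  fix x y show "inv U (x + y) = inv U x + inv U y"
    by (metis U_Ui Ui_U clinear_add[OF lin])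
next
  fix c x show "inv U (scaleC c x) = scaleC c (inv U x)"
    by (metis U_Ui Ui_U clinear_scaleC[OF lin])
qed
lemma Ui_norm: "norm (inv U y) = norm y" using norm[of "inv U y"] by (simp add: U_Ui)
lemma adj: "hs_adj U = inv U"
proof (rule hs_adj_eq)
  fix x y show "cinner (U x) y = cinner x (inv U y)"
    using isom[of x "inv U y"] by (simp add: U_Ui)
qed
end

section \<open>Positive operators and square roots of projections\<close>

lemma positive_selfadj:
  fixes D :: "'a::chilbert \<Rightarrow> 'a"
  assumes D: "hs_positive D"
  shows "cinner (D x) y = cinner x (D y)"
proof -
  have lin: "hs_clinear D" using D unfolding hs_positive_def hs_bounded_def by blast
  have im: "\<And>v. Im (cinner (D v) v) = 0" using D unfolding hs_positive_def by blast
  define a where "a = cinner (D x) y"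
  define b where "b = cinner (D y) x"
  have e1: "cinner (D (x + y)) (x + y) = cinner (D x) x + a + b + cinner (D y) y"
    unfolding a_def b_def by (simp only: clinear_add[OF lin] cinner_add_left cinner_add_right ac_simps)
  have e2: "cinner (D (x + scaleC \<i> y)) (x + scaleC \<i> y) = cinner (D x) x - \<i> * a + \<i> * b + cinner (D y) y"
    unfolding a_def b_def
    by (simp only: clinear_add[OF lin] clinear_scaleC[OF lin] cinner_add_left cinner_add_right
        cinner_scaleC_left cinner_scaleC_right) (simp add: algebra_simps)
  have i1: "Im (a + b) = 0" using im[of "x + y"] im[of x] im[of y] unfolding e1 by simp
  have i2: "Re (b - a) = 0" using im[of "x + scaleC \<i> y"] im[of x] im[of y] unfolding e2 by simp
  have "b = cnj a" using i1 i2 by (simp add: complex_eq_iff)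
  then have "cinner x (D y) = a" unfolding b_def by (subst cinner_commute) simp
  then show ?thesis unfolding a_def by simp
qed

lemma sqrt_proj:
  fixes A :: "'a::chilbert \<Rightarrow> 'a"
  assumes linA: "hs_clinear A" and bA: "\<And>x. norm (A x) \<le> norm x"
    and idem: "\<And>x. A (A x) = A x" and sa: "\<And>x y. cinner (A x) y = cinner x (A y)"
  shows "hs_sqrt A = A"
  unfolding hs_sqrt_def
proof (rule the_equality)
  have AA: "\<And>x. cinner (A x) x = cinner (A x) (A x)"
    by (metis idem sa)
  show "hs_positive A \<and> A \<circ> A = A"
    unfolding hs_positive_def hs_bounded_def
    using linA bA AA cinner_real_nonneg by (auto simp: o_def idem intro!: exI[of _ 1])
next
  fix D assume h: "hs_positive D \<and> D \<circ> D = A"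
  have AA: "\<And>x. cinner (A x) x = cinner (A x) (A x)"
    by (metis idem sa)
  from h have Dp: "hs_positive D" and DD: "\<And>x. D (D x) = A x" by (auto simp: fun_eq_iff)
  have linD: "hs_clinear D" using Dp unfolding hs_positive_def hs_bounded_def by blast
  have DA: "D (A x) = A (D x)" for x
  proof -
    have "D (A x) = D (D (D x))" using DD[of x] by (rule arg_cong[OF sym])
    also have "\<dots> = A (D x)" by (rule DD)
    finally show ?thesis .
  qed
  show "D = A"
  proof
    fix x
    define u where "u = D x - A x"
    have "D u + A u = 0"
      unfolding u_def
      by (simp add: clinear_diff[OF linD] clinear_diff[OF linA] DD DA idem)
    then have Du: "D u = - A u" by (simp add: eq_neg_iff_add_eq_0)
    have "cinner (D u) u + cinner (A u) u = 0"
      using \<open>D u + A u = 0\<close> by (simp only: cinner_add_left[symmetric]) simp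
    moreover have "0 \<le> Re (cinner (D u) u)" using Dp unfolding hs_positive_def by blast
    moreover have "cinner (A u) u = complex_of_real ((norm (A u))^2)"
      using AA[of u] by (simp add: cinner_self_real)
    ultimately have "(norm (A u))^2 \<le> 0"
      by (metis add_nonneg_nonneg Re_complex_of_real zero_complex.simps(1) plus_complex.sel(1)
          le_add_same_cancel2 nle_le zero_le_power2)
    then have Au: "A u = 0" by simp
    then have Du0: "D u = 0" using Du by simp
    have "cinner u u = cinner (D x) u - cinner (A x) u" unfolding u_def by (rule cinner_diff_left)
    also have "\<dots> = cinner x (D u) - cinner x (A u)"
      using positive_selfadj[OF Dp] sa by simp
    also have "\<dots> = 0" using Au Du0 by simp
    finally have "u = 0" using cinner_eq_zero_iff by blast
    then show "D x = A x" unfolding u_def by simp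
  qed
qed

section \<open>Invertibility of I - zT\<close>

lemma contraction_bij:
  fixes T :: "'a::chilbert \<Rightarrow> 'a"
  assumes linT: "hs_clinear T" and bT: "\<And>x. norm (T x) \<le> norm x" and z: "cmod z < 1"
  shows "bij (\<lambda>x. x - scaleC z (T x))"
proof -
  have lip: "norm (scaleC z (T x) - scaleC z (T y)) \<le> cmod z * norm (x - y)" for x y
  proof -
    have "scaleC z (T x) - scaleC z (T y) = scaleC z (T (x - y))"
      by (simp add: clinear_diff[OF linT] scaleC_diff_right)
    then show ?thesis by (simp add: norm_scaleC bT mult_left_mono)
  qed
  show ?thesis
    unfolding bij_def
  proof
    show "inj (\<lambda>x. x - scaleC z (T x))"
    proof (rule injI)
      fix x y assume "x - scaleC z (T x) = y - scaleC z (T y)"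
      then have "x - y = scaleC z (T x) - scaleC z (T y)" by (simp add: algebra_simps)
      then have "norm (x - y) \<le> cmod z * norm (x - y)" using lip by metis
      then have "norm (x - y) = 0" using z
        by (metis mult_le_cancel_right1 norm_ge_zero not_less order.antisym)
      then show "x = y" by simp
    qed
  next
    show "surj (\<lambda>x. x - scaleC z (T x))"
    proof (rule surjI)
      fix w
      have "\<exists>!v. w + scaleC z (T v) = v"
        by (rule banach_fix_type[of "cmod z"]) (use z lip in \<open>auto simp: dist_norm\<close>)
      then obtain v where "w + scaleC z (T v) = v" by blast
      then show "(SOME v. v - scaleC z (T v) = w) - scaleC z (T (SOME v. v - scaleC z (T v) = w)) = w"
        by (metis (mono_tags, lifting) add_diff_cancel someI_ex)
    qed
  qed
qed


locale compr = unitary_op U for U :: "'a::chilbert \<Rightarrow> 'a" +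
  fixes K :: "'a set"
  assumes K: "hs_closed_subspace K"
begin

abbreviation "P \<equiv> hs_proj K"
abbreviation "Ui \<equiv> inv U"
definition "S = (\<lambda>x. U x - P (U x))"

lemma Pin: "P x \<in> K" using proj_props(1)[OF K] .
lemma Porth: "k \<in> K \<Longrightarrow> cinner (x - P x) k = 0" using proj_props(2)[OF K] .
lemma Pfix: "k \<in> K \<Longrightarrow> P k = k" using proj_fix[OF K] .
lemma Pidem: "P (P x) = P x" using proj_idem[OF K] .
lemma Pdiff: "P (x - y) = P x - P y" using proj_diff[OF K] .
lemma Plin: "hs_clinear P" unfolding hs_clinear_def using proj_add[OF K] proj_scaleC[OF K] by blast
lemma Psa: "cinner (P x) y = cinner x (P y)" using proj_selfadj[OF K] .
lemma Pnorm: "norm (P x) \<le> norm x" using proj_norm[OF K] .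

lemma Unorm: "norm (U x) = norm x" by (rule norm)
lemma Uadj: "cinner (U x) y = cinner x (Ui y)" using isom[of x "Ui y"] by (simp add: U_Ui)

lemma S_adj: "hs_adj S = (\<lambda>y. Ui (y - P y))"
proof (rule hs_adj_eq)
  fix x y
  have "cinner (S x) y = cinner (U x) y - cinner (P (U x)) y"
    unfolding S_def by (rule cinner_diff_left)
  also have "\<dots> = cinner (U x) (y - P y)" by (simp add: Psa cinner_diff_right)
  also have "\<dots> = cinner x (Ui (y - P y))" by (rule Uadj)
  finally show "cinner (S x) y = cinner x (Ui (y - P y))" .
qed

lemma Q_norm: "norm (y - P y) \<le> norm y"
proof -
  have "(norm (P y + (y - P y)))^2 = (norm (P y))^2 + (norm (y - P y))^2"
    by (rule pythagoras) (rule cinner_commute_zero[OF Porth[OF Pin]])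
  then have "(norm (y - P y))^2 \<le> (norm y)^2" by simp
  then show ?thesis by (simp add: power2_le_iff_abs_le)
qed

lemma defect_S: "U x \<in> K \<Longrightarrow> defect S x = x"
proof -
  assume x: "U x \<in> K"
  define B1 where "B1 = (\<lambda>x. Ui (P (U x)))"
  have eq: "(\<lambda>x. x - hs_adj S (S x)) = B1"
  proof
    fix x
    have PS: "P (S x) = 0" unfolding S_def by (simp add: Pdiff Pidem)
    have "hs_adj S (S x) = Ui (S x - P (S x))" by (simp only: S_adj)
    also have "\<dots> = Ui (U x - P (U x))" unfolding PS by (simp add: S_def)
    also have "\<dots> = x - Ui (P (U x))" by (simp add: clinear_diff[OF Ui_lin] Ui_U)
    finally show "x - hs_adj S (S x) = B1 x" unfolding B1_def by simp
  qed
  have linB: "hs_clinear B1" unfolding B1_def hs_clinear_def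
    by (simp add: clinear_add[OF lin] clinear_add[OF Ui_lin] clinear_add[OF Plin]
        clinear_scaleC[OF lin] clinear_scaleC[OF Ui_lin] clinear_scaleC[OF Plin])
  have "hs_sqrt B1 = B1"
  proof (rule sqrt_proj[OF linB])
    fix x show "norm (B1 x) \<le> norm x" unfolding B1_def using Pnorm[of "U x"] by (simp add: Ui_norm Unorm)
  next
    fix x show "B1 (B1 x) = B1 x" unfolding B1_def by (simp add: U_Ui Pidem)
  next
    fix x y show "cinner (B1 x) y = cinner x (B1 y)"
    proof -
      have "cinner (B1 x) y = cinner (U (B1 x)) (U y)" by (simp add: isom)
      also have "\<dots> = cinner (P (U x)) (U y)" unfolding B1_def by (simp add: U_Ui)
      also have "\<dots> = cinner (U x) (P (U y))" by (rule Psa)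
      also have "\<dots> = cinner x (B1 y)" unfolding B1_def by (rule Uadj)
      finally show ?thesis .
    qed
  qed
  then have "defect S = B1" unfolding defect_def eq .
  then show ?thesis using x by (simp add: B1_def Pfix Ui_U)
qed

lemma defect_star_S: "defect_star S = P"
proof -
  have eq: "(\<lambda>x. x - S (hs_adj S x)) = P"
  proof
    fix x
    have "S (hs_adj S x) = S (Ui (x - P x))" by (simp only: S_adj)
    also have "\<dots> = (x - P x) - P (x - P x)" unfolding S_def by (simp add: U_Ui)
    also have "\<dots> = x - P x" by (simp add: Pdiff Pidem)
    finally show "x - S (hs_adj S x) = P x" by simp
  qed
  have "hs_sqrt P = P"
    by (rule sqrt_proj[OF Plin Pnorm Pidem Psa])
  then show ?thesis unfolding defect_star_def eq .
qed


lemma Sadj_lin: "hs_clinear (hs_adj S)"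
  unfolding S_adj hs_clinear_def
proof (intro conjI allI)
  fix x y
  have "x + y - P (x + y) = (x - P x) + (y - P y)" by (simp add: clinear_add[OF Plin])
  then show "Ui (x + y - P (x + y)) = Ui (x - P x) + Ui (y - P y)" by (simp only: clinear_add[OF Ui_lin])
next
  fix c x
  have "scaleC c x - P (scaleC c x) = scaleC c (x - P x)"
    by (simp add: clinear_scaleC[OF Plin] scaleC_diff_right)
  then show "Ui (scaleC c x - P (scaleC c x)) = scaleC c (Ui (x - P x))" by (simp only: clinear_scaleC[OF Ui_lin])
qed

lemma R_bij: "cmod z < 1 \<Longrightarrow> bij (\<lambda>y. y - scaleC z (hs_adj S y))"
  by (rule contraction_bij[OF Sadj_lin]) (simp_all add: S_adj Ui_norm Q_norm)

lemma Ui_bij: "cmod z < 1 \<Longrightarrow> bij (\<lambda>y. y - scaleC z (Ui y))"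
  by (rule contraction_bij[OF Ui_lin]) (simp_all add: Ui_norm)

lemma V_eq: "Ui (U v - scaleC z v) = v - scaleC z (Ui v)"
  by (simp add: clinear_diff[OF Ui_lin] clinear_scaleC[OF Ui_lin] Ui_U)

lemma V_inj: "cmod z < 1 \<Longrightarrow> inj (\<lambda>x. U x - scaleC z x)"
proof (rule injI)
  fix x y assume z: "cmod z < 1" and h: "U x - scaleC z x = U y - scaleC z y"
  have "x - scaleC z (Ui x) = y - scaleC z (Ui y)" using arg_cong[OF h, of Ui] by (simp add: V_eq)
  then show "x = y" using Ui_bij[OF z] unfolding bij_def inj_def by blast
qed

lemma V_surj: "cmod z < 1 \<Longrightarrow> \<exists>v. U v - scaleC z v = k"
proof -
  assume z: "cmod z < 1"
  obtain v where "v - scaleC z (Ui v) = Ui k" using Ui_bij[OF z] unfolding bij_def surj_def by metis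
  then have "Ui (U v - scaleC z v) = Ui k" by (simp add: V_eq)
  then have "U v - scaleC z v = k" by (metis U_Ui)
  then show ?thesis by blast
qed

lemma S0: "U x \<in> K \<Longrightarrow> S x = 0" unfolding S_def by (simp add: Pfix)

lemma char_on:
  assumes "U x \<in> K"
  shows "char_fun S z x = scaleC z (P (inv (\<lambda>y. y - scaleC z (hs_adj S y)) x))"
  unfolding char_fun_def using assms by (simp add: S0 defect_S defect_star_S)

lemma main_eq:
  assumes z: "cmod z < 1" and k1: "k1 \<in> K" and k2: "k2 \<in> K"
  shows "(let w = inv_into (hs_adj U ` K) (\<lambda>x. U x - char_fun S z x) k1 in cinner (U w + char_fun S z w) k2)
       = cinner (U (inv (\<lambda>x. U x - scaleC z x) k1) + scaleC z (inv (\<lambda>x. U x - scaleC z x) k1)) k2"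
proof -
  define R where "R = (\<lambda>y. y - scaleC z (hs_adj S y))"
  define V where "V = (\<lambda>x. U x - scaleC z x)"
  define f where "f = (\<lambda>x. U x - char_fun S z x)"
  have Rb: "bij R" unfolding R_def by (rule R_bij[OF z])
  have Vi: "inj V" unfolding V_def by (rule V_inj[OF z])
  obtain v where vk: "V v = k1" using V_surj[OF z] unfolding V_def by blast
  have vinv: "inv V k1 = v" using vk Vi by (metis inv_f_f)
  have UR: "U (R y) = U y - scaleC z (y - P y)" for y
    unfolding R_def S_adj by (simp add: clinear_diff[OF lin] clinear_scaleC[OF lin] U_Ui)
  have UV: "U v = k1 + scaleC z v" using vk unfolding V_def by (simp add: algebra_simps)
  define w0 where "w0 = R v"
  have Uw0: "U w0 = k1 + scaleC z (P v)"
    unfolding w0_def UR UV by (simp add: scaleC_diff_right algebra_simps)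
  have Uw0K: "U w0 \<in> K" unfolding Uw0 using K k1 Pin unfolding hs_closed_subspace_def by blast
  have w0A: "w0 \<in> hs_adj U ` K" unfolding adj using Uw0K Ui_U[of w0] by (metis image_eqI)
  have Rinv: "inv R (R y) = y" for y using Rb by (simp add: bij_def inv_f_f)
  have charw0: "char_fun S z w0 = scaleC z (P v)"
    using char_on[OF Uw0K, where z=z] unfolding R_def[symmetric] w0_def Rinv .
  have fw0: "f w0 = k1" unfolding f_def charw0 Uw0 by simp
  have uniq: "x = w0" if x: "x \<in> hs_adj U ` K" "f x = k1" for x
  proof -
    have UxK: "U x \<in> K" using x(1) unfolding adj by (auto simp: U_Ui)
    define v' where "v' = inv R x"
    have Rv': "R v' = x" unfolding v'_def using Rb by (simp add: bij_def surj_f_inv_f)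
    have cx: "char_fun S z x = scaleC z (P v')"
      using char_on[OF UxK, where z=z] unfolding R_def[symmetric] v'_def .
    have "U x = U v' - scaleC z (v' - P v')" using UR[of v'] Rv' by simp
    then have "V v' = k1" using x(2) unfolding f_def cx V_def
      by (simp add: scaleC_diff_right algebra_simps)
    then have "v' = v" using vk Vi unfolding inj_def by metis
    then show "x = w0" using Rv' unfolding w0_def by simp
  qed
  have wdef: "inv_into (hs_adj U ` K) f k1 = w0"
    unfolding inv_into_def
  proof (rule some_equality)
    show "w0 \<in> hs_adj U ` K \<and> f w0 = k1" using w0A fw0 by blast
  next
    fix x assume "x \<in> hs_adj U ` K \<and> f x = k1" then show "x = w0" using uniq by blast
  qed
  have orth: "cinner v k2 = cinner (P v) k2" using Porth[OF k2, of v] by (simp add: cinner_diff_left)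
  have "(let w = inv_into (hs_adj U ` K) f k1 in cinner (U w + char_fun S z w) k2)
      = cinner (k1 + scaleC z (P v) + scaleC z (P v)) k2"
    unfolding wdef Let_def charw0 Uw0 ..
  also have "\<dots> = cinner k1 k2 + z * cinner (P v) k2 + z * cinner (P v) k2"
    by (simp only: cinner_add_left cinner_scaleC_left)
  also have "\<dots> = cinner k1 k2 + z * cinner v k2 + z * cinner v k2" by (simp only: orth)
  also have "\<dots> = cinner (k1 + scaleC z v + scaleC z v) k2"
    by (simp only: cinner_add_left cinner_scaleC_left)
  also have "\<dots> = cinner (U (inv V k1) + scaleC z (inv V k1)) k2" unfolding vinv UV ..
  finally show ?thesis unfolding f_def V_def .
qed

end


lemma unit_circle_closed: "closed unit_circle" by simp

lemma borel_circle_eq: "borel_circle = sets (restrict_space borel unit_circle)"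
proof -
  have c: "unit_circle \<inter> space borel \<in> sets borel" by simp
  show ?thesis unfolding borel_circle_def using sets_restrict_space_iff[OF c] by auto
qed

lemma circ_meas:
  fixes f :: "complex \<Rightarrow> 'b::topological_space"
  assumes "sets M = borel_circle" and "continuous_on unit_circle f"
  shows "f \<in> borel_measurable M"
proof -
  have "f \<in> borel_measurable (restrict_space borel unit_circle)"
    by (rule borel_measurable_continuous_on_restrict) fact
  moreover have "measurable M (borel::'b measure) = measurable (restrict_space borel unit_circle) borel"
    by (rule measurable_cong_sets) (simp_all add: assms(1) borel_circle_eq)
  ultimately show ?thesis by simp
qed

lemma circ_bound:
  fixes f :: "complex \<Rightarrow> 'b::real_normed_vector"
  assumes "continuous_on unit_circle f"
  obtains B where "\<And>x. x \<in> unit_circle \<Longrightarrow> norm (f x) \<le> B"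
proof -
  have "compact (f ` unit_circle)" by (rule compact_continuous_image[OF assms]) simp
  then have "bounded (f ` unit_circle)" by (rule compact_imp_bounded)
  then obtain B where "\<forall>y\<in>f ` unit_circle. norm y \<le> B" by (auto simp: bounded_iff)
  then show ?thesis using that by blast
qed

lemma circ_integrable:
  fixes f :: "complex \<Rightarrow> 'b::{banach,second_countable_topology}"
  assumes "finite_measure M" "space M = unit_circle" "sets M = borel_circle"
    and "continuous_on unit_circle f"
  shows "integrable M f"
proof -
  interpret finite_measure M by fact
  obtain B where B: "\<And>x. x \<in> unit_circle \<Longrightarrow> norm (f x) \<le> B" using circ_bound[OF assms(4)] by blast
  show ?thesis
  proof (rule integrable_const_bound)
    show "AE x in M. norm (f x) \<le> B" using B assms(2) by (intro AE_I2) auto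
    show "f \<in> borel_measurable M" by (rule circ_meas) fact+
  qed
qed

lemma integral_bound_circ:
  fixes f :: "complex \<Rightarrow> 'b::{banach,second_countable_topology}"
  assumes "finite_measure M" "integrable M f" "\<And>x. x \<in> space M \<Longrightarrow> norm (f x) \<le> B"
  shows "norm (integral\<^sup>L M f) \<le> B * measure M (space M)"
proof -
  interpret finite_measure M by fact
  have "norm (integral\<^sup>L M f) \<le> integral\<^sup>L M (\<lambda>x. norm (f x))" by (rule integral_norm_bound)
  also have "\<dots> \<le> integral\<^sup>L M (\<lambda>x. B)"
    by (rule integral_mono) (use assms in auto)
  also have "\<dots> = B * measure M (space M)" by simp
  finally show ?thesis .
qed


lemma small_bound:
  fixes x C :: real
  assumes h: "\<And>t. 0 < t \<Longrightarrow> t < 1 \<Longrightarrow> x \<le> t / (1 - t) * C" and C: "0 \<le> C"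
  shows "x \<le> 0"
proof (rule ccontr)
  assume "\<not> x \<le> 0"
  then have x: "0 < x" by simp
  define t where "t = x / (2 * (C + x))"
  have t0: "0 < t" unfolding t_def using x C by simp
  have th: "t \<le> 1/2" unfolding t_def using x C by (simp add: field_simps)
  have "t / (1 - t) \<le> 2 * t" using t0 th by (simp add: field_simps)
  then have "t / (1 - t) * C \<le> 2 * t * C" using C by (rule mult_right_mono)
  also have "2 * t * C = x * C / (C + x)" unfolding t_def using x C by (simp add: field_simps)
  also have "\<dots> < x" using x C by (simp add: field_simps power2_eq_square)
  finally have "t / (1 - t) * C < x" .
  moreover have "x \<le> t / (1 - t) * C" using h[OF t0] th by simp
  ultimately show False by simp
qed

definition hz :: "complex \<Rightarrow> complex \<Rightarrow> complex" where
  "hz z = (\<lambda>\<xi>. 1 / (1 - z * cnj \<xi>))"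

lemma hz_denom: "cmod z < 1 \<Longrightarrow> \<xi> \<in> unit_circle \<Longrightarrow> 1 - z * cnj \<xi> \<noteq> 0"
proof
  assume z: "cmod z < 1" and xi: "\<xi> \<in> unit_circle" and e: "1 - z * cnj \<xi> = 0"
  then have "z * cnj \<xi> = 1" by simp
  then have "cmod (z * cnj \<xi>) = 1" by simp
  then have "cmod z = 1" using xi by (simp add: norm_mult)
  then show False using z by simp
qed

lemma hz_cont: "cmod z < 1 \<Longrightarrow> continuous_on unit_circle (hz z)"
  unfolding hz_def by (intro continuous_intros) (auto dest: hz_denom)

lemma herg_hz:
  assumes "cmod z < 1" "\<xi> \<in> unit_circle"
  shows "(\<xi> + z) / (\<xi> - z) = 2 * hz z \<xi> - 1"
proof -
  define D where "D = 1 - z * cnj \<xi>"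
  have d: "D \<noteq> 0" unfolding D_def by (rule hz_denom[OF assms])
  have n: "\<xi> * cnj \<xi> = 1" using assms(2) by (simp add: complex_norm_square[symmetric])
  have x0: "\<xi> \<noteq> 0" using assms(2) by auto
  have "\<xi> * D = \<xi> - z * (\<xi> * cnj \<xi>)" unfolding D_def by (simp add: algebra_simps)
  then have e1: "\<xi> - z = \<xi> * D" unfolding n by simp
  have "\<xi> * (2 - D) = \<xi> + z * (\<xi> * cnj \<xi>)" unfolding D_def by (simp add: algebra_simps)
  then have e2: "\<xi> + z = \<xi> * (2 - D)" unfolding n by simp
  have "(\<xi> + z) / (\<xi> - z) = (2 - D) / D" unfolding e1 e2 using x0 by simp
  also have "\<dots> = 2 / D - 1" using d by (simp add: diff_divide_distrib)
  finally show ?thesis unfolding hz_def D_def by simp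
qed



lemma hz_expand:
  assumes z: "cmod z < 1" and xi: "\<xi> \<in> unit_circle"
  shows "hz z \<xi> = (\<Sum>j<n. z^j * cnj \<xi> ^ j) + z^n * (cnj \<xi> ^ n * hz z \<xi>)"
proof -
  define a where "a = z * cnj \<xi>"
  have d: "1 - a \<noteq> 0" unfolding a_def by (rule hz_denom[OF z xi])
  then have a1: "a \<noteq> 1" by simp
  have "(\<Sum>j<n. z^j * cnj \<xi> ^ j) = (\<Sum>j<n. a^j)" unfolding a_def by (simp add: power_mult_distrib)
  also have "\<dots> = (1 - a^n) / (1 - a)" using a1 by (simp add: sum_gp_strict)
  finally have s: "(\<Sum>j<n. z^j * cnj \<xi> ^ j) = (1 - a^n) / (1 - a)" .
  have h: "hz z \<xi> = 1 / (1 - a)" unfolding hz_def a_def ..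
  have "z^n * (cnj \<xi> ^ n * hz z \<xi>) = a^n / (1 - a)" unfolding h a_def by (simp add: power_mult_distrib)
  then show ?thesis unfolding s h using d by (simp add: diff_divide_distrib add_divide_distrib[symmetric])
qed

lemma hz_expand_int:
  assumes L: "finite_measure L" "space L = unit_circle" "sets L = borel_circle" and z: "cmod z < 1"
  shows "integral\<^sup>L L (hz z) = (\<Sum>j<n. z^j * (\<integral>\<xi>. cnj \<xi> ^ j \<partial>L)) + z^n * (\<integral>\<xi>. cnj \<xi> ^ n * hz z \<xi> \<partial>L)"
proof -
  have c1: "continuous_on unit_circle (\<lambda>\<xi>. cnj \<xi> ^ n * hz z \<xi>)"
    by (intro continuous_intros hz_cont[OF z])
  have c2: "continuous_on unit_circle (\<lambda>\<xi>. z^j * cnj \<xi> ^ j)" for j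
    by (intro continuous_intros)
  have "integral\<^sup>L L (hz z) = (\<integral>\<xi>. (\<Sum>j<n. z^j * cnj \<xi> ^ j) + z^n * (cnj \<xi> ^ n * hz z \<xi>) \<partial>L)"
    by (rule Bochner_Integration.integral_cong) (use L hz_expand[OF z] in auto)
  also have "\<dots> = (\<Sum>j<n. z^j * (\<integral>\<xi>. cnj \<xi> ^ j \<partial>L)) + z^n * (\<integral>\<xi>. cnj \<xi> ^ n * hz z \<xi> \<partial>L)"
    using circ_integrable[OF L c1] circ_integrable[OF L c2]
    by (simp add: Bochner_Integration.integral_sum)
  finally show ?thesis .
qed

lemma hz_bound_int:
  assumes L: "finite_measure L" "space L = unit_circle" "sets L = borel_circle"
    and t: "0 < t" "t < 1"
  shows "norm ((\<integral>\<xi>. cnj \<xi> ^ n * hz (of_real t) \<xi> \<partial>L) - (\<integral>\<xi>. cnj \<xi> ^ n \<partial>L))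
           \<le> t / (1 - t) * measure L (space L)"
proof -
  define z where "z = complex_of_real t"
  have z: "cmod z < 1" unfolding z_def using t by simp
  have c1: "continuous_on unit_circle (\<lambda>\<xi>. cnj \<xi> ^ n * hz z \<xi>)"
    by (intro continuous_intros hz_cont[OF z])
  have c2: "continuous_on unit_circle (\<lambda>\<xi>. cnj \<xi> ^ n)" by (intro continuous_intros)
  have "(\<integral>\<xi>. cnj \<xi> ^ n * hz z \<xi> \<partial>L) - (\<integral>\<xi>. cnj \<xi> ^ n \<partial>L)
      = (\<integral>\<xi>. cnj \<xi> ^ n * hz z \<xi> - cnj \<xi> ^ n \<partial>L)"
    using circ_integrable[OF L c1] circ_integrable[OF L c2] by simp
  also have "norm \<dots> \<le> t / (1 - t) * measure L (space L)"
  proof (rule integral_bound_circ[OF L(1)])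
    show "integrable L (\<lambda>\<xi>. cnj \<xi> ^ n * hz z \<xi> - cnj \<xi> ^ n)"
      by (rule circ_integrable[OF L]) (intro continuous_intros c1)
  next
    fix \<xi> assume "\<xi> \<in> space L"
    then have xi: "\<xi> \<in> unit_circle" using L by simp
    define a where "a = z * cnj \<xi>"
    have d: "1 - a \<noteq> 0" unfolding a_def by (rule hz_denom[OF z xi])
    have na: "cmod a = t" unfolding a_def z_def using xi t by (simp add: norm_mult)
    have "1 - t \<le> cmod (1 - a)"
      using norm_triangle_ineq2[of 1 a] na by simp
    then have n1: "1 - t \<le> cmod (1 - a)" .
    have "cnj \<xi> ^ n * hz z \<xi> - cnj \<xi> ^ n = cnj \<xi> ^ n * (a / (1 - a))"
      unfolding hz_def a_def[symmetric] using d by (simp add: field_simps)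
    then have "norm (cnj \<xi> ^ n * hz z \<xi> - cnj \<xi> ^ n) = cmod a / cmod (1 - a)"
      using xi by (simp add: norm_mult norm_power norm_divide)
    also have "\<dots> \<le> t / (1 - t)" unfolding na
    proof (rule divide_left_mono)
      show "0 < cmod (1 - a) * (1 - t)" using n1 t by (intro mult_pos_pos) auto
    qed (use n1 t in auto)
    finally show "norm (cnj \<xi> ^ n * hz z \<xi> - cnj \<xi> ^ n) \<le> t / (1 - t)" .
  qed
  finally show ?thesis unfolding z_def .
qed

locale circ2 = M: finite_measure M + N: finite_measure N for M N :: "complex measure" +
  assumes spM: "space M = unit_circle" and stM: "sets M = borel_circle"
    and spN: "space N = unit_circle" and stN: "sets N = borel_circle"
    and herg: "\<And>z. cmod z < 1 \<Longrightarrow> (\<integral>\<xi>. (\<xi> + z) / (\<xi> - z) \<partial>M) = (\<integral>\<xi>. (\<xi> + z) / (\<xi> - z) \<partial>N)"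
begin

lemma intM: "continuous_on unit_circle f \<Longrightarrow> integrable M (f :: complex \<Rightarrow> 'b::{banach,second_countable_topology})"
  by (rule circ_integrable[OF M.finite_measure_axioms spM stM])
lemma intN: "continuous_on unit_circle f \<Longrightarrow> integrable N (f :: complex \<Rightarrow> 'b::{banach,second_countable_topology})"
  by (rule circ_integrable[OF N.finite_measure_axioms spN stN])

lemma mass: "measure M unit_circle = measure N unit_circle"
proof -
  have "(\<integral>\<xi>. (\<xi> + 0) / (\<xi> - 0) \<partial>M) = (\<integral>\<xi>. 1 \<partial>M)"
    by (rule Bochner_Integration.integral_cong) (auto simp: spM)
  moreover have "(\<integral>\<xi>. (\<xi> + 0) / (\<xi> - 0) \<partial>N) = (\<integral>\<xi>. 1 \<partial>N)"
    by (rule Bochner_Integration.integral_cong) (auto simp: spN)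
  ultimately have "(\<integral>\<xi>. (1::complex) \<partial>M) = (\<integral>\<xi>. 1 \<partial>N)" using herg[of 0] by simp
  then show ?thesis by (simp add: spM spN)
qed

lemma herg_h: "cmod z < 1 \<Longrightarrow> integral\<^sup>L M (hz z) = integral\<^sup>L N (hz z)"
proof -
  assume z: "cmod z < 1"
  have hL: "(\<integral>\<xi>. (\<xi> + z) / (\<xi> - z) \<partial>L) = (\<integral>\<xi>. 2 * hz z \<xi> - 1 \<partial>L)" if "space L = unit_circle" for L
    by (rule Bochner_Integration.integral_cong) (use that herg_hz[OF z] in auto)
  have "(\<integral>\<xi>. 2 * hz z \<xi> - 1 \<partial>M) = (\<integral>\<xi>. 2 * hz z \<xi> - 1 \<partial>N)"
    using herg[OF z] hL[OF spM] hL[OF spN] by simp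
  moreover have "(\<integral>\<xi>. 2 * hz z \<xi> - 1 \<partial>M) = 2 * integral\<^sup>L M (hz z) - measure M unit_circle"
    using intM[OF hz_cont[OF z]] by (simp add: spM scaleR_conv_of_real)
  moreover have "(\<integral>\<xi>. 2 * hz z \<xi> - 1 \<partial>N) = 2 * integral\<^sup>L N (hz z) - measure N unit_circle"
    using intN[OF hz_cont[OF z]] by (simp add: spN scaleR_conv_of_real)
  ultimately show ?thesis using mass by simp
qed

definition mom :: "complex measure \<Rightarrow> nat \<Rightarrow> complex" where
  "mom L n = (\<integral>\<xi>. cnj \<xi> ^ n \<partial>L)"


lemma mom_eq: "mom M n = mom N n"
proof (induction n rule: less_induct)
  case (less n)
  define C where "C = measure M unit_circle + measure N unit_circle"
  have C0: "0 \<le> C" unfolding C_def by simp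
  have key: "norm (mom M n - mom N n) \<le> t / (1 - t) * C" if t: "0 < t" "t < 1" for t
  proof -
    define z where "z = complex_of_real t"
    have z: "cmod z < 1" unfolding z_def using t by simp
    have z0: "z \<noteq> 0" unfolding z_def using t by simp
    define gM where "gM = (\<integral>\<xi>. cnj \<xi> ^ n * hz z \<xi> \<partial>M)"
    define gN where "gN = (\<integral>\<xi>. cnj \<xi> ^ n * hz z \<xi> \<partial>N)"
    have eM: "integral\<^sup>L M (hz z) = (\<Sum>j<n. z^j * mom M j) + z^n * gM"
      unfolding gM_def mom_def by (rule hz_expand_int[OF M.finite_measure_axioms spM stM z])
    have eN: "integral\<^sup>L N (hz z) = (\<Sum>j<n. z^j * mom N j) + z^n * gN"
      unfolding gN_def mom_def by (rule hz_expand_int[OF N.finite_measure_axioms spN stN z])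
    have se: "(\<Sum>j<n. z^j * mom M j) = (\<Sum>j<n. z^j * mom N j)" using less by simp
    have "(\<Sum>j<n. z^j * mom M j) + z^n * gM = (\<Sum>j<n. z^j * mom N j) + z^n * gN"
      using herg_h[OF z] unfolding eM eN .
    then have "z^n * gM = z^n * gN" unfolding se by (rule add_left_imp_eq)
    then have g: "gM = gN" using z0 by simp
    have bM: "norm (gM - mom M n) \<le> t / (1 - t) * measure M unit_circle"
      unfolding gM_def mom_def z_def using hz_bound_int[OF M.finite_measure_axioms spM stM t] spM by simp
    have bN: "norm (gN - mom N n) \<le> t / (1 - t) * measure N unit_circle"
      unfolding gN_def mom_def z_def using hz_bound_int[OF N.finite_measure_axioms spN stN t] spN by simp
    have dd: "mom M n - mom N n = (gN - mom N n) - (gM - mom M n)" using g by simp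
    have "norm (mom M n - mom N n) \<le> norm (gN - mom N n) + norm (gM - mom M n)"
      unfolding dd by (rule norm_triangle_ineq4)
    also have "\<dots> \<le> t / (1 - t) * measure N unit_circle + t / (1 - t) * measure M unit_circle"
      using bM bN by simp
    also have "\<dots> = t / (1 - t) * C" unfolding C_def by (simp add: algebra_simps)
    finally show ?thesis .
  qed
  have "norm (mom M n - mom N n) \<le> 0" by (rule small_bound[OF key C0])
  then show ?case by simp
qed

end


fun evalp :: "(complex \<times> nat \<times> nat) list \<Rightarrow> complex \<Rightarrow> complex" where
  "evalp [] x = 0"
| "evalp (t # ts) x = fst t * x ^ fst (snd t) * cnj x ^ snd (snd t) + evalp ts x"

definition pmul :: "(complex \<times> nat \<times> nat) list \<Rightarrow> (complex \<times> nat \<times> nat) list \<Rightarrow> (complex \<times> nat \<times> nat) list" where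
  "pmul ts us = concat (map (\<lambda>t. map (\<lambda>u. (fst t * fst u, fst (snd t) + fst (snd u), snd (snd t) + snd (snd u))) us) ts)"

lemma evalp_append: "evalp (xs @ ys) x = evalp xs x + evalp ys x"
  by (induction xs) auto

lemma evalp_map: "evalp (map (\<lambda>u. (fst t * fst u, fst (snd t) + fst (snd u), snd (snd t) + snd (snd u))) us) x
   = fst t * x ^ fst (snd t) * cnj x ^ snd (snd t) * evalp us x"
  by (induction us) (auto simp: algebra_simps power_add)

lemma evalp_pmul: "evalp (pmul ts us) x = evalp ts x * evalp us x"
  unfolding pmul_def
  by (induction ts) (auto simp: evalp_append evalp_map algebra_simps)

lemma evalp_cont: "continuous_on S (evalp ts)"
proof (induction ts)
  case Nil
  have "evalp [] = (\<lambda>x. 0)" by (rule ext) simp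
  then show ?case by (simp add: continuous_on_const)
next
  case (Cons t ts)
  have "evalp (t # ts) = (\<lambda>x. fst t * x ^ fst (snd t) * cnj x ^ snd (snd t) + evalp ts x)" by (rule ext) simp
  then show ?case using Cons by (simp only:) (intro continuous_intros)
qed

context circ2
begin

lemma mono_int: "(\<integral>x. x ^ a * cnj x ^ b \<partial>M) = (\<integral>x. x ^ a * cnj x ^ b \<partial>N)"
proof (cases "a \<le> b")
  case True
  have e: "x ^ a * cnj x ^ b = cnj x ^ (b - a)" if "x \<in> unit_circle" for x
  proof -
    have "x * cnj x = 1" using that by (simp add: complex_norm_square[symmetric])
    then have "x ^ a * cnj x ^ a = 1" by (metis power_mult_distrib power_one)
    moreover have "cnj x ^ b = cnj x ^ a * cnj x ^ (b - a)" using True by (simp add: power_add[symmetric])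
    ultimately show ?thesis by (simp add: mult.assoc[symmetric])
  qed
  have "(\<integral>x. x ^ a * cnj x ^ b \<partial>M) = mom M (b - a)"
    unfolding mom_def by (rule Bochner_Integration.integral_cong) (use e spM in auto)
  moreover have "(\<integral>x. x ^ a * cnj x ^ b \<partial>N) = mom N (b - a)"
    unfolding mom_def by (rule Bochner_Integration.integral_cong) (use e spN in auto)
  ultimately show ?thesis using mom_eq by simp
next
  case False
  have e: "x ^ a * cnj x ^ b = cnj (cnj x ^ (a - b))" if "x \<in> unit_circle" for x
  proof -
    have "x * cnj x = 1" using that by (simp add: complex_norm_square[symmetric])
    then have "x ^ b * cnj x ^ b = 1" by (metis power_mult_distrib power_one)
    moreover have "x ^ a = x ^ b * x ^ (a - b)" using False by (simp add: power_add[symmetric])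
    ultimately show ?thesis by (simp add: algebra_simps)
  qed
  have "(\<integral>x. x ^ a * cnj x ^ b \<partial>M) = (\<integral>x. cnj (cnj x ^ (a - b)) \<partial>M)"
    by (rule Bochner_Integration.integral_cong) (use e spM in auto)
  also have "\<dots> = cnj (mom M (a - b))" unfolding mom_def by (rule Bochner_Integration.integral_cnj)
  finally have 1: "(\<integral>x. x ^ a * cnj x ^ b \<partial>M) = cnj (mom M (a - b))" .
  have "(\<integral>x. x ^ a * cnj x ^ b \<partial>N) = (\<integral>x. cnj (cnj x ^ (a - b)) \<partial>N)"
    by (rule Bochner_Integration.integral_cong) (use e spN in auto)
  also have "\<dots> = cnj (mom N (a - b))" unfolding mom_def by (rule Bochner_Integration.integral_cnj)
  finally have 2: "(\<integral>x. x ^ a * cnj x ^ b \<partial>N) = cnj (mom N (a - b))" .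
  show ?thesis using 1 2 mom_eq by simp
qed

lemma evalp_int: "integral\<^sup>L M (evalp ts) = integral\<^sup>L N (evalp ts)"
proof (induction ts)
  case Nil
  have "evalp [] = (\<lambda>x. 0)" by (rule ext) simp
  then show ?case by simp
next
  case (Cons t ts)
  obtain c a b where t: "t = (c, a, b)" by (cases t) auto
  have eq: "evalp (t # ts) = (\<lambda>x. c * (x ^ a * cnj x ^ b) + evalp ts x)" by (rule ext) (simp add: t mult.assoc)
  have c: "continuous_on unit_circle (\<lambda>x. x ^ a * cnj x ^ b)" by (intro continuous_intros)
  show ?case unfolding eq
    using intM[OF c] intN[OF c] intM[OF evalp_cont] intN[OF evalp_cont] Cons mono_int by simp
qed

end

definition Rset :: "(complex \<Rightarrow> real) set" where
  "Rset = {g. \<exists>ts. \<forall>x. complex_of_real (g x) = evalp ts x}"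

lemma Rset_ring: "function_ring_on Rset unit_circle"
proof
  show "compact unit_circle" by simp
next
  fix f assume "f \<in> Rset"
  then obtain ts where ts: "\<And>x. complex_of_real (f x) = evalp ts x" unfolding Rset_def by blast
  have "f = (\<lambda>x. Re (evalp ts x))" by (rule ext) (metis Re_complex_of_real ts)
  moreover have "continuous_on unit_circle (\<lambda>x. Re (evalp ts x))" by (intro continuous_intros evalp_cont)
  ultimately show "continuous_on unit_circle f" by simp
next
  fix f g assume "f \<in> Rset" "g \<in> Rset"
  then obtain ts us where ts: "\<And>x. complex_of_real (f x) = evalp ts x"
    and us: "\<And>x. complex_of_real (g x) = evalp us x" unfolding Rset_def by blast
  show "(\<lambda>x. f x + g x) \<in> Rset" unfolding Rset_def
    by (rule CollectI, rule exI[of _ "ts @ us"]) (simp add: evalp_append ts[symmetric] us[symmetric])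
  show "(\<lambda>x. f x * g x) \<in> Rset" unfolding Rset_def
    by (rule CollectI, rule exI[of _ "pmul ts us"]) (simp add: evalp_pmul ts[symmetric] us[symmetric])
next
  fix c :: real
  show "(\<lambda>_. c) \<in> Rset" unfolding Rset_def
    by (rule CollectI, rule exI[of _ "[(complex_of_real c, 0, 0)]"]) simp
next
  fix x y :: complex assume "x \<noteq> y"
  have re: "Re \<in> Rset" unfolding Rset_def
  proof (rule CollectI, rule exI[of _ "[(1/2, 1, 0), (1/2, 0, 1)]"], rule allI)
    fix x :: complex
    have "evalp [(1/2, 1, 0), (1/2, 0, 1)] x = (x + cnj x) / 2" by (simp add: field_simps)
    also have "\<dots> = complex_of_real (Re x)" unfolding complex_add_cnj by simp
    finally show "complex_of_real (Re x) = evalp [(1/2, 1, 0), (1/2, 0, 1)] x" by simp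
  qed
  have im: "Im \<in> Rset" unfolding Rset_def
  proof (rule CollectI, rule exI[of _ "[(- \<i>/2, 1, 0), (\<i>/2, 0, 1)]"], rule allI)
    fix x :: complex
    have "evalp [(- \<i>/2, 1, 0), (\<i>/2, 0, 1)] x = (- \<i>/2) * (x - cnj x)" by (simp add: field_simps)
    also have "\<dots> = complex_of_real (Im x)" unfolding complex_diff_cnj by (simp add: field_simps)
    finally show "complex_of_real (Im x) = evalp [(- \<i>/2, 1, 0), (\<i>/2, 0, 1)] x" by simp
  qed
  have "Re x \<noteq> Re y \<or> Im x \<noteq> Im y" using \<open>x \<noteq> y\<close> complex_eqI by blast
  then show "\<exists>f\<in>Rset. f x \<noteq> f y" using re im by blast
qed

context circ2
begin

lemma cont_int:
  fixes f :: "complex \<Rightarrow> real"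
  assumes f: "continuous_on unit_circle f"
  shows "integral\<^sup>L M f = integral\<^sup>L N f"
proof -
  interpret R: function_ring_on Rset unit_circle by (rule Rset_ring)
  define C where "C = measure M unit_circle + measure N unit_circle"
  have C0: "0 \<le> C" unfolding C_def by simp
  have "\<bar>integral\<^sup>L M f - integral\<^sup>L N f\<bar> \<le> 0 + e" if e: "0 < e" for e
  proof -
    define e' where "e' = e / (C + 1)"
    have e': "0 < e'" unfolding e'_def using e C0 by simp
    obtain g where gR: "g \<in> Rset" and fg: "\<And>x. x \<in> unit_circle \<Longrightarrow> \<bar>f x - g x\<bar> < e'"
      using R.Stone_Weierstrass_basic[OF f e'] by blast
    obtain ts where ts: "\<And>x. complex_of_real (g x) = evalp ts x" using gR unfolding Rset_def by blast
    have gc: "continuous_on unit_circle g" by (rule R.continuous[OF gR])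
    have "complex_of_real (integral\<^sup>L M g) = integral\<^sup>L M (evalp ts)"
      unfolding integral_complex_of_real[symmetric] ts ..
    also have "\<dots> = integral\<^sup>L N (evalp ts)" by (rule evalp_int)
    also have "\<dots> = complex_of_real (integral\<^sup>L N g)"
      unfolding integral_complex_of_real[symmetric] ts ..
    finally have gg: "integral\<^sup>L M g = integral\<^sup>L N g" by simp
    have dc: "continuous_on unit_circle (\<lambda>x. f x - g x)" by (intro continuous_intros f gc)
    have bM: "norm (integral\<^sup>L M (\<lambda>x. f x - g x)) \<le> e' * measure M (space M)"
      by (rule integral_bound_circ[OF M.finite_measure_axioms intM[OF dc]]) (use fg spM in \<open>auto intro: less_imp_le\<close>)
    have bN: "norm (integral\<^sup>L N (\<lambda>x. f x - g x)) \<le> e' * measure N (space N)"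
      by (rule integral_bound_circ[OF N.finite_measure_axioms intN[OF dc]]) (use fg spN in \<open>auto intro: less_imp_le\<close>)
    have "integral\<^sup>L M f - integral\<^sup>L N f = integral\<^sup>L M (\<lambda>x. f x - g x) - integral\<^sup>L N (\<lambda>x. f x - g x)"
      using intM[OF f] intN[OF f] intM[OF gc] intN[OF gc] gg by simp
    then have "\<bar>integral\<^sup>L M f - integral\<^sup>L N f\<bar> \<le> e' * C"
      using bM bN unfolding C_def spM spN by (simp add: algebra_simps)
    also have "\<dots> \<le> e" unfolding e'_def using e C0 by (simp add: field_simps)
    finally show ?thesis by simp
  qed
  then have "\<bar>integral\<^sup>L M f - integral\<^sup>L N f\<bar> \<le> 0" by (rule field_le_epsilon)
  then show ?thesis by simp
qed


lemma closed_eq: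
  assumes C: "closed C" "C \<subseteq> unit_circle"
  shows "measure M C = measure N C"
proof (cases "C = {}")
  case True then show ?thesis by simp
next
  case False
  define s where "s = (\<lambda>(n::nat) x. max 0 (1 - real n * infdist x C))"
  have Cb: "C \<in> borel_circle" unfolding borel_circle_def using C by auto
  have sc: "continuous_on unit_circle (s n)" for n unfolding s_def by (intro continuous_intros)
  have lim: "(\<lambda>n. s n x) \<longlonglongrightarrow> indicator C x" for x
  proof (cases "x \<in> C")
    case True
    then have "infdist x C = 0" using in_closed_iff_infdist_zero[OF C(1) False] by blast
    then show ?thesis using True by (simp add: s_def)
  next
    case xC: False
    have d: "0 < infdist x C" by (rule infdist_pos_not_in_closed[OF C(1) False xC])
    obtain N :: nat where N: "1 / infdist x C < real N" using reals_Archimedean2 by blast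
    have "\<forall>n\<ge>N. s n x = 0"
    proof (intro allI impI)
      fix n assume "N \<le> n"
      then have "1 / infdist x C < real n" using N by linarith
      then have "1 < real n * infdist x C" using d by (simp add: divide_less_eq)
      then show "s n x = 0" unfolding s_def by simp
    qed
    then have "eventually (\<lambda>n. s n x = indicator C x) sequentially"
      using xC by (auto simp: eventually_sequentially)
    then show ?thesis by (rule tendsto_eventually)
  qed
  have bnd: "norm (s n x) \<le> 1" for n x
    unfolding s_def using infdist_nonneg[of x C] by (simp add: mult_nonneg_nonneg)
  have conv: "(\<lambda>n. integral\<^sup>L L (s n)) \<longlonglongrightarrow> measure L C"
    if L: "finite_measure L" "space L = unit_circle" "sets L = borel_circle" for L
  proof -
    interpret L: finite_measure L by (rule L(1))
    have "(\<lambda>n. integral\<^sup>L L (s n)) \<longlonglongrightarrow> integral\<^sup>L L (indicator C :: complex \<Rightarrow> real)"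
    proof (rule integral_dominated_convergence[where w="\<lambda>_. 1"])
      show "indicator C \<in> borel_measurable L" using Cb L by (intro borel_measurable_indicator) simp
      show "\<And>n. s n \<in> borel_measurable L" by (rule circ_meas[OF L(3) sc])
      show "integrable L (\<lambda>_. 1::real)" by simp
      show "AE x in L. (\<lambda>n. s n x) \<longlonglongrightarrow> indicator C x" using lim by simp
      show "\<And>n. AE x in L. norm (s n x) \<le> 1" using bnd by simp
    qed
    also have "integral\<^sup>L L (indicator C :: complex \<Rightarrow> real) = measure L C"
      using C L by (simp add: Int_absorb2)
    finally show ?thesis .
  qed
  have "(\<lambda>n. integral\<^sup>L M (s n)) \<longlonglongrightarrow> measure N C"
    using conv[OF N.finite_measure_axioms spN stN] cont_int[OF sc] by simp
  then show ?thesis using conv[OF M.finite_measure_axioms spM stM] LIMSEQ_unique by blast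
qed

lemma emeasure_eq:
  assumes D: "D \<in> borel_circle"
  shows "emeasure M D = emeasure N D"
proof -
  have idM: "(\<lambda>x. x) \<in> measurable M borel" by (rule circ_meas[OF stM]) (intro continuous_intros)
  have idN: "(\<lambda>x. x) \<in> measurable N borel" by (rule circ_meas[OF stN]) (intro continuous_intros)
  have eM: "emeasure (distr M borel (\<lambda>x. x)) A = emeasure M (A \<inter> unit_circle)" if "A \<in> sets borel" for A
    using emeasure_distr[OF idM that] spM by (simp add: Int_commute)
  have eN: "emeasure (distr N borel (\<lambda>x. x)) A = emeasure N (A \<inter> unit_circle)" if "A \<in> sets borel" for A
    using emeasure_distr[OF idN that] spN by (simp add: Int_commute)
  have "distr M borel (\<lambda>x. x) = distr N borel (\<lambda>x. x)"
  proof (rule measure_eqI_generator_eq[where E="Collect closed" and \<Omega>=UNIV and A="\<lambda>_. UNIV"])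
    show "Int_stable (Collect closed)" by (auto simp: Int_stable_def)
    show "Collect closed \<subseteq> Pow UNIV" by simp
  next
    fix X :: "complex set" assume "X \<in> Collect closed"
    then have X: "closed X" by simp
    then have Xb: "X \<in> sets borel" by simp
    have c: "closed (X \<inter> unit_circle)" using X by (intro closed_Int) auto
    have b: "X \<inter> unit_circle \<in> borel_circle" unfolding borel_circle_def using c by auto
    have "emeasure M (X \<inter> unit_circle) = emeasure N (X \<inter> unit_circle)"
      using closed_eq[OF c] b stM stN by (simp add: M.emeasure_eq_measure N.emeasure_eq_measure)
    then show "emeasure (distr M borel (\<lambda>x. x)) X = emeasure (distr N borel (\<lambda>x. x)) X"
      using eM[OF Xb] eN[OF Xb] by simp
  next
    show "sets (distr M borel (\<lambda>x. x)) = sigma_sets UNIV (Collect closed)"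
      by (simp add: borel_eq_closed)
    show "sets (distr N borel (\<lambda>x. x)) = sigma_sets UNIV (Collect closed)"
      by (simp add: borel_eq_closed)
    show "range (\<lambda>_. UNIV) \<subseteq> Collect closed" by auto
    show "(\<Union>i::nat. UNIV) = (UNIV :: complex set)" by simp
    show "\<And>i::nat. emeasure (distr M borel (\<lambda>x. x)) UNIV \<noteq> \<infinity>"
      using eM[of UNIV] by simp
  qed
  moreover have "D \<in> sets borel" "D \<inter> unit_circle = D" using D unfolding borel_circle_def by auto
  ultimately show ?thesis using eM eN by metis
qed

end


lemma borel_circle_sa: "sigma_algebra unit_circle borel_circle"
proof -
  have "sigma_algebra (space (restrict_space borel unit_circle)) (sets (restrict_space borel unit_circle))"
    by (rule sets.sigma_algebra_axioms)
  then show ?thesis by (simp add: borel_circle_eq space_restrict_space)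
qed

lemma re_cinner_add_left: "Re (cinner (a + b) k) = Re (cinner a k) + Re (cinner b (k::'a::cinner_space))"
  by (simp add: cinner_add_left)

lemma re_cinner_sum: "Re (cinner (\<Sum>i<(n::nat). y i) k) = (\<Sum>i<n. Re (cinner (y i) (k::'a::cinner_space)))"
  by (induction n) (simp_all add: re_cinner_add_left)

lemma re_cinner_cont: "continuous_on UNIV (\<lambda>y. Re (cinner y (k::'a::cinner_space)))"
proof -
  have "(\<lambda>y. Re (cinner y k)) = (\<lambda>y. ((norm (y + k))^2 - (norm (y - k))^2) / 4)"
    by (rule ext) (rule re_cinner_polar)
  moreover have "continuous_on UNIV (\<lambda>y. ((norm (y + k))^2 - (norm (y - k))^2) / 4)"
    by (intro continuous_intros) auto
  ultimately show ?thesis by (simp only:)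
qed

context
  fixes K :: "'a::chilbert set" and G :: "complex set \<Rightarrow> 'a \<Rightarrow> 'a" and k :: 'a
  assumes G: "gen_spectral_measure K G" and k: "k \<in> K"
begin

definition "mu = (\<lambda>D. ennreal (Re (cinner (G D k) k)))"

lemma G_pos: "D \<in> borel_circle \<Longrightarrow> 0 \<le> Re (cinner (G D k) k)"
  using G k unfolding gen_spectral_measure_def by blast

lemma mu_pos: "positive borel_circle mu"
  unfolding positive_def mu_def using G k unfolding gen_spectral_measure_def by simp

lemma mu_ca: "countably_additive borel_circle mu"
  unfolding countably_additive_def
proof (intro allI impI)
  fix A :: "nat \<Rightarrow> complex set"
  assume A: "range A \<subseteq> borel_circle" "disjoint_family A" "\<Union> (range A) \<in> borel_circle"
  have lim: "(\<lambda>n. \<Sum>i<n. G (A i) k) \<longlonglongrightarrow> G (\<Union> (range A)) k"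
    using G k A unfolding gen_spectral_measure_def by blast
  have "(\<lambda>n. Re (cinner (\<Sum>i<n. G (A i) k) k)) \<longlonglongrightarrow> Re (cinner (G (\<Union> (range A)) k) k)"
    by (rule continuous_on_tendsto_compose[OF re_cinner_cont lim]) auto
  then have "(\<lambda>i. Re (cinner (G (A i) k) k)) sums Re (cinner (G (\<Union> (range A)) k) k)"
    unfolding sums_def re_cinner_sum .
  moreover have nn: "\<And>i. 0 \<le> Re (cinner (G (A i) k) k)" using A(1) G_pos by blast
  ultimately show "(\<Sum>i. mu (A i)) = mu (\<Union> (range A))"
    unfolding mu_def by (simp add: suminf_ennreal2 sums_summable sums_unique[symmetric])
qed

lemma opm_sets: "sets (opm_scalar G k) = borel_circle"
proof -
  have "sets (opm_scalar G k) = sigma_sets unit_circle borel_circle"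
    unfolding opm_scalar_def by (rule sets_measure_of) (auto simp: borel_circle_def)
  also have "\<dots> = borel_circle" by (rule sigma_algebra.sigma_sets_eq[OF borel_circle_sa])
  finally show ?thesis .
qed

lemma opm_space: "space (opm_scalar G k) = unit_circle"
  unfolding opm_scalar_def by (rule space_measure_of) (auto simp: borel_circle_def)

lemma opm_emeasure: "D \<in> borel_circle \<Longrightarrow> emeasure (opm_scalar G k) D = ennreal (Re (cinner (G D k) k))"
proof -
  assume D: "D \<in> borel_circle"
  have e: "opm_scalar G k = measure_of unit_circle borel_circle mu" unfolding opm_scalar_def mu_def ..
  show ?thesis unfolding e using emeasure_measure_of_sigma[OF borel_circle_sa mu_pos mu_ca D]
    by (simp add: mu_def)
qed

lemma opm_finite: "finite_measure (opm_scalar G k)"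
proof (rule finite_measureI)
  have "unit_circle \<in> borel_circle" unfolding borel_circle_def by auto
  then show "emeasure (opm_scalar G k) (space (opm_scalar G k)) \<noteq> \<infinity>"
    by (simp add: opm_space opm_emeasure)
qed

end


lemma opm_scale:
  assumes G: "gen_spectral_measure K G" and K: "hs_closed_subspace K" and k: "k \<in> K"
    and f: "continuous_on unit_circle f"
  shows "integral\<^sup>L (opm_scalar G (scaleC c k)) f = complex_of_real ((cmod c)^2) * integral\<^sup>L (opm_scalar G k) (f :: complex \<Rightarrow> complex)"
proof -
  define r where "r = (cmod c)^2"
  have r0: "0 \<le> r" unfolding r_def by simp
  have ck: "scaleC c k \<in> K" using K k unfolding hs_closed_subspace_def by blast
  have eq: "opm_scalar G (scaleC c k) = density (opm_scalar G k) (\<lambda>_. ennreal r)"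
  proof (rule measure_eqI)
    show "sets (opm_scalar G (scaleC c k)) = sets (density (opm_scalar G k) (\<lambda>_. ennreal r))"
      using opm_sets[OF G ck] opm_sets[OF G k] by simp
  next
    fix A assume "A \<in> sets (opm_scalar G (scaleC c k))"
    then have A: "A \<in> borel_circle" using opm_sets[OF G ck] by simp
    have lin: "G A (scaleC c k) = scaleC c (G A k)" using G A k unfolding gen_spectral_measure_def by blast
    have "Re (cinner (G A (scaleC c k)) (scaleC c k)) = r * Re (cinner (G A k) k)"
    proof -
      have "cinner (G A (scaleC c k)) (scaleC c k) = cnj c * (c * cinner (G A k) k)"
        unfolding lin by (simp only: cinner_scaleC_left cinner_scaleC_right)
      also have "\<dots> = complex_of_real r * cinner (G A k) k"
        unfolding r_def by (simp only: mult.assoc[symmetric] mult.commute[of "cnj c" c] complex_mult_cnj cmod_power2)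
      finally show ?thesis by simp
    qed
    moreover have "emeasure (density (opm_scalar G k) (\<lambda>_. ennreal r)) A = ennreal r * emeasure (opm_scalar G k) A"
      using A opm_sets[OF G k] by (simp add: emeasure_density nn_integral_cmult_indicator)
    ultimately show "emeasure (opm_scalar G (scaleC c k)) A = emeasure (density (opm_scalar G k) (\<lambda>_. ennreal r)) A"
      using opm_emeasure[OF G ck A] opm_emeasure[OF G k A] r0 G_pos[OF G k A] by (simp add: ennreal_mult)
  qed
  have fm: "f \<in> borel_measurable (opm_scalar G k)" by (rule circ_meas[OF opm_sets[OF G k] f])
  have "integral\<^sup>L (opm_scalar G (scaleC c k)) f = integral\<^sup>L (opm_scalar G k) (\<lambda>x. r *\<^sub>R f x)"
    unfolding eq by (rule integral_density[OF fm]) (use r0 in auto)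
  also have "\<dots> = complex_of_real r * integral\<^sup>L (opm_scalar G k) f"
    by (simp add: scaleR_conv_of_real)
  finally show ?thesis unfolding r_def .
qed

lemma opm_integral_kk:
  assumes G: "gen_spectral_measure K G" and K: "hs_closed_subspace K" and k: "k \<in> K"
    and f: "continuous_on unit_circle f"
  shows "opm_integral G f k k = integral\<^sup>L (opm_scalar G k) f"
proof -
  have e: "k + scaleC (\<i> ^ j) k = scaleC (1 + \<i> ^ j) k" for j
    by (simp add: scaleC_add_left scaleC_one)
  have "opm_integral G f k k = (1/4) * (\<Sum>j<4::nat. \<i> ^ j * (complex_of_real ((cmod (1 + \<i> ^ j))^2) * integral\<^sup>L (opm_scalar G k) f))"
    unfolding opm_integral_def e opm_scale[OF G K k f] ..
  also have "\<dots> = integral\<^sup>L (opm_scalar G k) f"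
    by (simp add: numeral_eq_Suc cmod_def power2_eq_square algebra_simps)
  finally show ?thesis .
qed


lemma polar_zero:
  fixes C :: "'a::chilbert \<Rightarrow> 'a"
  assumes K: "hs_closed_subspace K"
    and add: "\<And>x y. x \<in> K \<Longrightarrow> y \<in> K \<Longrightarrow> C (x + y) = C x + C y"
    and sc: "\<And>c x. x \<in> K \<Longrightarrow> C (scaleC c x) = scaleC c (C x)"
    and z: "\<And>x. x \<in> K \<Longrightarrow> cinner (C x) x = 0"
    and x: "x \<in> K" and y: "y \<in> K"
  shows "cinner (C x) y = 0"
proof -
  have iy: "scaleC \<i> y \<in> K" using K y unfolding hs_closed_subspace_def by blast
  have xy: "x + y \<in> K" using K x y unfolding hs_closed_subspace_def by blast
  have xiy: "x + scaleC \<i> y \<in> K" using K x iy unfolding hs_closed_subspace_def by blast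
  define a where "a = cinner (C x) y"
  define b where "b = cinner (C y) x"
  have "0 = cinner (C (x + y)) (x + y)" using z[OF xy] by simp
  also have "\<dots> = cinner (C x) x + a + b + cinner (C y) y"
    unfolding a_def b_def add[OF x y] by (simp only: cinner_add_left cinner_add_right ac_simps)
  finally have e1: "a + b = 0" using z[OF x] z[OF y] by simp
  have "0 = cinner (C (x + scaleC \<i> y)) (x + scaleC \<i> y)" using z[OF xiy] by simp
  also have "\<dots> = cinner (C x) x + cnj \<i> * a + \<i> * b + \<i> * (cnj \<i> * cinner (C y) y)"
    unfolding a_def b_def add[OF x iy] sc[OF y]
    by (simp only: cinner_add_left cinner_add_right cinner_scaleC_left cinner_scaleC_right ac_simps) (simp add: algebra_simps)
  finally have e2: "- \<i> * a + \<i> * b = 0" using z[OF x] z[OF y] by simp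
  have b: "b = - a" using e1 by (simp add: add_eq_0_iff)
  have "- (2 * \<i>) * a = 0" using e2 unfolding b by (simp add: algebra_simps)
  then have "a = 0" by simp
  then show ?thesis unfolding a_def .
qed


lemma UNIV_subspace: "hs_closed_subspace (UNIV :: 'a::chilbert set)"
  unfolding hs_closed_subspace_def by simp

lemma f_cont: "cmod z < 1 \<Longrightarrow> continuous_on unit_circle (\<lambda>\<xi>. (\<xi> + z) / (\<xi> - z))"
proof -
  assume z: "cmod z < 1"
  have "\<xi> - z \<noteq> 0" if "\<xi> \<in> unit_circle" for \<xi> using that z by auto
  then show ?thesis by (intro continuous_intros) auto
qed

theorem corollary3p3:
  fixes U :: "'h::chilbert \<Rightarrow> 'h"
    and K :: "'h set"
    and E B :: "complex set \<Rightarrow> 'h \<Rightarrow> 'h"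
  assumes U: "hs_unitary U"
    and K: "hs_closed_subspace K"
    and E: "spectral_measure E"
    and E_repr: "\<And>h1 h2 z. norm z < 1 \<Longrightarrow>
        cinner (U (inv (\<lambda>x. U x - scaleC z x) h1) + scaleC z (inv (\<lambda>x. U x - scaleC z x) h1)) h2
        = opm_integral E (\<lambda>\<xi>. (\<xi> + z) / (\<xi> - z)) h1 h2"
    and B: "gen_spectral_measure K B"
    and B_repr: "\<And>k1 k2 z. k1 \<in> K \<Longrightarrow> k2 \<in> K \<Longrightarrow> norm z < 1 \<Longrightarrow>
        (let S = (\<lambda>x. U x - hs_proj K (U x));
             w = inv_into (hs_adj U ` K) (\<lambda>x. U x - char_fun S z x) k1
         in cinner (U w + char_fun S z w) k2)
        = opm_integral B (\<lambda>\<xi>. (\<xi> + z) / (\<xi> - z)) k1 k2"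
  shows "\<forall>\<Delta>\<in>borel_circle. \<forall>k\<in>K. B \<Delta> k = hs_proj K (E \<Delta> k)"
proof -
  interpret compr U K by unfold_locales (rule U, rule K)
  have EG: "gen_spectral_measure UNIV E" using E unfolding spectral_measure_def by blast
  have key: "cinner (B D k) k = cinner (E D k) k" if k: "k \<in> K" and D: "D \<in> borel_circle" for k D
  proof -
    have kU: "k \<in> (UNIV :: 'h set)" by simp
    interpret circ2 "opm_scalar B k" "opm_scalar E k"
    proof (rule circ2.intro[OF opm_finite[OF B k] opm_finite[OF EG kU]], unfold_locales)
      show "space (opm_scalar B k) = unit_circle" by (rule opm_space[OF B k])
      show "sets (opm_scalar B k) = borel_circle" by (rule opm_sets[OF B k])
      show "space (opm_scalar E k) = unit_circle" by (rule opm_space[OF EG kU])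
      show "sets (opm_scalar E k) = borel_circle" by (rule opm_sets[OF EG kU])
    next
      fix z :: complex assume z: "cmod z < 1"
      have "(\<integral>\<xi>. (\<xi> + z) / (\<xi> - z) \<partial>opm_scalar B k) = opm_integral B (\<lambda>\<xi>. (\<xi> + z) / (\<xi> - z)) k k"
        by (rule opm_integral_kk[OF B K k f_cont[OF z], symmetric])
      also have "\<dots> = (let S = (\<lambda>x. U x - hs_proj K (U x));
             w = inv_into (hs_adj U ` K) (\<lambda>x. U x - char_fun S z x) k
         in cinner (U w + char_fun S z w) k)"
        using B_repr[OF k k] z by simp
      also have "\<dots> = (let w = inv_into (hs_adj U ` K) (\<lambda>x. U x - char_fun S z x) k in cinner (U w + char_fun S z w) k)"
        unfolding S_def Let_def ..
      also have "\<dots> = cinner (U (inv (\<lambda>x. U x - scaleC z x) k) + scaleC z (inv (\<lambda>x. U x - scaleC z x) k)) k"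
        by (rule main_eq[OF z k k])
      also have "\<dots> = opm_integral E (\<lambda>\<xi>. (\<xi> + z) / (\<xi> - z)) k k"
        using E_repr z by simp
      also have "\<dots> = (\<integral>\<xi>. (\<xi> + z) / (\<xi> - z) \<partial>opm_scalar E k)"
        by (rule opm_integral_kk[OF EG UNIV_subspace kU f_cont[OF z]])
      finally show "(\<integral>\<xi>. (\<xi> + z) / (\<xi> - z) \<partial>opm_scalar B k) = (\<integral>\<xi>. (\<xi> + z) / (\<xi> - z) \<partial>opm_scalar E k)" .
    qed
    have "ennreal (Re (cinner (B D k) k)) = ennreal (Re (cinner (E D k) k))"
      using emeasure_eq[OF D] opm_emeasure[OF B k D] opm_emeasure[OF EG kU D] by simp
    then have re: "Re (cinner (B D k) k) = Re (cinner (E D k) k)"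
      using G_pos[OF B k D] G_pos[OF EG kU D] by simp
    have imB: "Im (cinner (B D k) k) = 0" using B k D unfolding gen_spectral_measure_def by blast
    have imE: "Im (cinner (E D k) k) = 0" using EG D unfolding gen_spectral_measure_def by blast
    show ?thesis using re imB imE by (simp add: complex_eq_iff)
  qed
  show ?thesis
  proof (intro ballI)
    fix D k assume D: "D \<in> borel_circle" and k: "k \<in> K"
    define C where "C = (\<lambda>x. B D x - P (E D x))"
    have Blin: "\<And>x y. x \<in> K \<Longrightarrow> y \<in> K \<Longrightarrow> B D (x + y) = B D x + B D y"
      "\<And>c x. x \<in> K \<Longrightarrow> B D (scaleC c x) = scaleC c (B D x)"
      "\<And>x. x \<in> K \<Longrightarrow> B D x \<in> K"
      using B D unfolding gen_spectral_measure_def by blast+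
    have Elin: "\<And>x y. E D (x + y) = E D x + E D y" "\<And>c x. E D (scaleC c x) = scaleC c (E D x)"
      using EG D unfolding gen_spectral_measure_def by blast+
    have Cadd: "C (x + y) = C x + C y" if "x \<in> K" "y \<in> K" for x y
      unfolding C_def using Blin(1)[OF that] Elin(1) clinear_add[OF Plin] by simp
    have Csc: "C (scaleC c x) = scaleC c (C x)" if "x \<in> K" for c x
      unfolding C_def using Blin(2)[OF that] Elin(2) clinear_scaleC[OF Plin] by (simp add: scaleC_diff_right)
    have Cz: "cinner (C x) x = 0" if x: "x \<in> K" for x
    proof -
      have "cinner (C x) x = cinner (B D x) x - cinner (P (E D x)) x"
        unfolding C_def by (rule cinner_diff_left)
      also have "cinner (P (E D x)) x = cinner (E D x) x" using Psa Pfix[OF x] by metis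
      finally show ?thesis using key[OF x D] by simp
    qed
    have CK: "C k \<in> K" unfolding C_def using closed_subspace_diff[OF K Blin(3)[OF k] Pin] .
    have "cinner (C k) (C k) = 0" by (rule polar_zero[OF K Cadd Csc Cz k CK])
    then have "C k = 0" using cinner_eq_zero_iff by blast
    then show "B D k = hs_proj K (E D k)" unfolding C_def by simp
  qed
qed


end
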